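(* Let $\theta_*(\rho)=\inf\{\theta\geq0:h_{\rho,1}(u(\theta))\leq0\}$ for $\rho>0$. (a) $\theta_*(\rho)=1$ for $\rho>\max_{x>0}\frac{k(1-e^{-x})^{k-1}}{x}$. For $\rho\leq\max_{x>0}\frac{k(1-e^{-x})^{k-1}}{x}$, $\theta_*(\rho)=1-(1-e^{-\lambda_\rho})^k$, where $\lambda_\rho$ is the maximum positive solution of $\rho=\frac{k(1-e^{-\lambda})^{k-1}}{\lambda}$; furthermore, for these $\rho$, $y_2(\theta_*(\rho),\rho)=\frac{k}{f_1(\lambda_\rho)}(1-\theta_*(\rho))$. (b) (I) $y_2(\theta_*(\rho_k),\rho_k)=1-\theta_*(\rho_k)>0$. (II) Writing $\theta_k=\theta_*(\rho_k)$ and $\vec y(\theta)=\vec y(\theta,\rho_k)$, we have $y_1'(\theta_k)<0$ and $y_2'(\theta_k)<0$. (III) There exists $\epsilon>0$ such that $\theta\mapsto\vec y(\theta,\rho_k)$ is twice continuously differentiable when considered on $[0,\theta_k]$ and on $[\theta_k,\theta_k+\epsilon]$ separately.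
   Context: Fix $k\geq3$. Let $f_1(\lambda)=\frac{\lambda(e^\lambda-1)}{e^\lambda-1-\lambda}$ for $\lambda>0$, let $\lambda_k$ be the unique positive solution of $f_1(\lambda)=k$, and $\rho_k=k(1-e^{-\lambda_k})^{k-1}/\lambda_k$. Let $u(\theta)=(1-\theta)^{1/k}$ and $h_{\rho,1}(u)=u-1+\exp(-ku^{k-1}/\rho)$. For $\theta\in[0,1)$ and $\vec x=(x_1,x_2)$ with $x_1\ge -k$, $x_2\ge0$, $\max(x_1,0)+2x_2\le k(1-\theta)$, let $\mathfrak p_0=\frac{\max(x_1,0)}{k(1-\theta)}$, $\mathfrak p_1=\frac{x_2\lambda^2}{k(1-\theta)(e^\lambda-1-\lambda)}$, $\mathfrak p_2=\frac{x_2\lambda}{k(1-\theta)}$, where for $x_2>0$, $\lambda$ is the unique positive solution of $f_1(\lambda)=\frac{k(1-\theta)-\max(x_1,0)}{x_2}$, and for $x_2=0$, $\mathfrak p_1=0$, $\mathfrak p_2=1-\mathfrak p_0$. Let $\vec F(\vec x,\theta)=(-1+(k-1)(\mathfrak p_1-\mathfrak p_0),-(k-1)\mathfrak p_1)$. For $\rho>0$, $\vec y(\theta,\rho)=(y_1,y_2)$ is the (unique) solution for $\theta\in[0,1)$ of $\frac{d\vec y}{d\theta}=\vec F(\vec y(\theta),\theta)$ with initial condition $\vec y(0,\rho)=(ke^{-k/\rho},\rho(1-e^{-k/\rho})-ke^{-k/\rho})$; derivatives $'$ are with respect to $\theta$. *)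

theory Defs
  imports "HOL-Analysis.Analysis"
begin

definition f1 :: "real \<Rightarrow> real" where
  "f1 l = l * (exp l - 1) / (exp l - 1 - l)"

definition lam_k :: "nat \<Rightarrow> real" where
  "lam_k k = (THE l. l > 0 \<and> f1 l = real k)"

definition rho_k :: "nat \<Rightarrow> real" where
  "rho_k k = real k * (1 - exp (- lam_k k)) ^ (k - 1) / lam_k k"

definition u_fun :: "nat \<Rightarrow> real \<Rightarrow> real" where
  "u_fun k \<theta> = (1 - \<theta>) powr (1 / real k)"

definition h_fun :: "nat \<Rightarrow> real \<Rightarrow> real \<Rightarrow> real" where
  "h_fun k \<rho> v = v - 1 + exp (- real k * v ^ (k - 1) / \<rho>)"

definition dom_ok :: "nat \<Rightarrow> real \<Rightarrow> real \<times> real \<Rightarrow> bool" where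
  "dom_ok k \<theta> x \<longleftrightarrow> fst x \<ge> - real k \<and> snd x \<ge> 0 \<and>
      max (fst x) 0 + 2 * snd x \<le> real k * (1 - \<theta>)"

definition lam_x :: "nat \<Rightarrow> real \<times> real \<Rightarrow> real \<Rightarrow> real" where
  "lam_x k x \<theta> = (THE l. l > 0 \<and> f1 l = (real k * (1 - \<theta>) - max (fst x) 0) / snd x)"

definition p0 :: "nat \<Rightarrow> real \<times> real \<Rightarrow> real \<Rightarrow> real" where
  "p0 k x \<theta> = max (fst x) 0 / (real k * (1 - \<theta>))"

definition p1 :: "nat \<Rightarrow> real \<times> real \<Rightarrow> real \<Rightarrow> real" where
  "p1 k x \<theta> = (if snd x = 0 then 0 else
     snd x * (lam_x k x \<theta>)^2 / (real k * (1 - \<theta>) * (exp (lam_x k x \<theta>) - 1 - lam_x k x \<theta>)))"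

definition p2 :: "nat \<Rightarrow> real \<times> real \<Rightarrow> real \<Rightarrow> real" where
  "p2 k x \<theta> = (if snd x = 0 then 1 - p0 k x \<theta> else
     snd x * lam_x k x \<theta> / (real k * (1 - \<theta>)))"

definition F_vec :: "nat \<Rightarrow> real \<times> real \<Rightarrow> real \<Rightarrow> real \<times> real" where
  "F_vec k x \<theta> = (-1 + (real k - 1) * (p1 k x \<theta> - p0 k x \<theta>), - (real k - 1) * p1 k x \<theta>)"

definition y_init :: "nat \<Rightarrow> real \<Rightarrow> real \<times> real" where
  "y_init k \<rho> = (real k * exp (- real k / \<rho>),
                  \<rho> * (1 - exp (- real k / \<rho>)) - real k * exp (- real k / \<rho>))"

definition is_y_solution :: "nat \<Rightarrow> (real \<Rightarrow> real \<Rightarrow> real \<times> real) \<Rightarrow> bool" where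
  "is_y_solution k y \<longleftrightarrow> (\<forall>\<rho>>0. y 0 \<rho> = y_init k \<rho> \<and>
     (\<forall>\<theta>\<in>{0..<1}. dom_ok k \<theta> (y \<theta> \<rho>) \<and>
        ((\<lambda>t. y t \<rho>) has_vector_derivative F_vec k (y \<theta> \<rho>) \<theta>) (at \<theta> within {0..<1})))"

definition theta_star :: "nat \<Rightarrow> real \<Rightarrow> real" where
  "theta_star k \<rho> = Inf {\<theta>. \<theta> \<ge> 0 \<and> h_fun k \<rho> (u_fun k \<theta>) \<le> 0}"

definition g_fun :: "nat \<Rightarrow> real \<Rightarrow> real" where
  "g_fun k x = real k * (1 - exp (- x)) ^ (k - 1) / x"

definition M_k :: "nat \<Rightarrow> real" where
  "M_k k = Sup (g_fun k ` {0<..})"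

definition lam_rho :: "nat \<Rightarrow> real \<Rightarrow> real" where
  "lam_rho k \<rho> = (GREATEST l. l > 0 \<and> \<rho> = g_fun k l)"

definition C2_on :: "real set \<Rightarrow> (real \<Rightarrow> 'a::real_normed_vector) \<Rightarrow> bool" where
  "C2_on S g \<longleftrightarrow> (\<exists>g' g''. (\<forall>t\<in>S. (g has_vector_derivative g' t) (at t within S)) \<and>
      (\<forall>t\<in>S. (g' has_vector_derivative g'' t) (at t within S)) \<and> continuous_on S g'')"

end

theory Submission
  imports Defs "HOL-Real_Asymp.Real_Asymp"
begin

definition EE :: "real \<Rightarrow> real" where "EE l = exp l - 1 - l"

lemma exp_partial_le:
  fixes x :: real assumes "0 \<le> x"
  shows "(\<Sum>n<N. x^n / fact n) \<le> exp x"
proof -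
  have s: "(\<lambda>n. x^n / fact n) sums exp x" using exp_converges[of x] by (simp add: divide_inverse mult.commute)
  have "(\<Sum>n<N. x^n / fact n) \<le> (\<Sum>n. x^n / fact n)"
    by (rule sum_le_suminf[OF sums_summable[OF s]]) (simp, intro divide_nonneg_pos zero_le_power assms fact_gt_zero)
  then show ?thesis using sums_unique[OF s] by simp
qed
lemma exp_cubic_lt:
  fixes x :: real assumes "0 < x"
  shows "1 + x + x^2/2 + x^3/6 \<le> exp x"
proof -
  have "(\<Sum>n<4. x^n / fact n) \<le> exp x" using assms by (intro exp_partial_le) simp
  moreover have "(\<Sum>n<4. x^n / fact n) = 1 + x + x^2/2 + x^3/6"
    by (simp add: eval_nat_numeral)
  ultimately show ?thesis by simp
qed

lemma exp_quad_lt: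
  fixes x :: real assumes "0 < x"
  shows "1 + x + x^2/2 < exp x"
proof -
  have "0 < x^3/6" using assms by simp
  thus ?thesis using exp_cubic_lt[OF assms] by linarith
qed

lemma EE_pos: assumes "0 < l" shows "0 < EE l"
proof -
  have "0 < l^2/2" using assms by simp
  thus ?thesis unfolding EE_def using exp_quad_lt[OF assms] by linarith
qed

lemma f1_alt: "0 < l \<Longrightarrow> f1 l = l + l^2 / EE l"
  using EE_pos[of l] unfolding f1_def EE_def by (simp add: field_simps power2_eq_square)

lemma f1_gt_self: assumes "0 < l" shows "l < f1 l"
proof -
  have "0 < l^2 / EE l" using EE_pos[OF assms] assms by simp
  thus ?thesis using f1_alt[OF assms] by linarith
qed

definition f1d :: "real \<Rightarrow> real" where
  "f1d l = ((exp l - 1)^2 - l^2 * exp l) / (EE l)^2"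

lemma f1_deriv: assumes "0 < l" shows "(f1 has_real_derivative f1d l) (at l)"
proof -
  have E: "exp l - 1 - l \<noteq> 0" using EE_pos[OF assms] by (simp add: EE_def)
  have "((\<lambda>l. l * (exp l - 1) / (exp l - 1 - l)) has_real_derivative
     (((exp l - 1) + l * exp l) * (exp l - 1 - l) - l * (exp l - 1) * (exp l - 1)) / (exp l - 1 - l)^2) (at l)"
    using E by (auto intro!: derivative_eq_intros simp: power2_eq_square)
  moreover have "(((exp l - 1) + l * exp l) * (exp l - 1 - l) - l * (exp l - 1) * (exp l - 1)) / (exp l - 1 - l)^2 = f1d l"
    unfolding f1d_def EE_def by (simp add: algebra_simps power2_eq_square)
  ultimately show ?thesis unfolding f1_def[abs_def] by simp
qed

lemma cosh_gt: assumes "0 < (x::real)" shows "2 < exp x + exp (-x)"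
proof -
  have em: "exp (-x) = inverse (exp x)" by (simp add: exp_minus)
  have "exp x > 1" using assms by simp
  hence "(exp x - 1)^2 > 0" by simp
  moreover have "(exp x - 1)^2 = exp x * exp x + 1 - 2 * exp x" by (simp add: power2_eq_square algebra_simps)
  ultimately have "exp x * exp x + 1 > 2 * exp x" by linarith
  hence "exp x + 1 / exp x > 2" by (simp add: field_simps)
  thus ?thesis by (simp add: em divide_inverse)
qed

lemma sinh_bound: assumes "0 < (s::real)" shows "2 * s < exp s - exp (- s)"
proof -
  define f where "f x = exp x - exp (-x) - 2 * x" for x :: real
  have "f 0 < f s"
  proof (rule DERIV_pos_imp_increasing_open[OF assms])
    fix x :: real assume x: "0 < x" "x < s"
    have d: "(f has_real_derivative exp x + exp (-x) - 2) (at x)"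
      unfolding f_def[abs_def] by (auto intro!: derivative_eq_intros)
    have "exp x + exp (-x) - 2 > 0" using cosh_gt[OF x(1)] by simp
    with d show "\<exists>y. (f has_real_derivative y) (at x) \<and> 0 < y" by blast
  next
    show "continuous_on {0..s} f" unfolding f_def[abs_def] by (intro continuous_intros)
  qed
  thus ?thesis by (simp add: f_def)
qed

lemma f1d_pos: assumes "0 < l" shows "0 < f1d l"
proof -
  define s where "s = l / 2"
  have s: "0 < s" using assms by (simp add: s_def)
  have l: "l = s + s" by (simp add: s_def)
  have e: "exp l = exp s * exp s" unfolding l by (rule exp_add)
  have em: "exp (-s) * exp s = 1" by (simp add: exp_minus)
  have "exp l - 1 = exp s * (exp s - exp (-s))"
  proof -
    have "exp s * (exp s - exp (-s)) = exp s * exp s - exp (-s) * exp s" by (simp only: algebra_simps)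
    thus ?thesis using e em by simp
  qed
  hence "(exp l - 1)^2 = (exp s)^2 * (exp s - exp (-s))^2" by (simp only: power_mult_distrib)
  hence eq: "(exp l - 1)^2 = exp l * (exp s - exp (-s))^2" using e by (simp only: power2_eq_square)
  have "(2 * s)^2 < (exp s - exp (-s))^2" using sinh_bound[OF s] s
    by (intro power_strict_mono) auto
  moreover have "(2 * s) = l" using l by simp
  ultimately have "l^2 < (exp s - exp (-s))^2" by simp
  hence "exp l * l^2 < exp l * (exp s - exp (-s))^2" by simp
  hence "l^2 * exp l < (exp l - 1)^2" unfolding eq by (simp only: mult.commute)
  moreover have "(EE l)^2 > 0" using EE_pos[OF assms] by simp
  ultimately show ?thesis unfolding f1d_def by (intro divide_pos_pos) simp_all
qed

lemma f1_cont: "0 < l \<Longrightarrow> isCont f1 l"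
  using f1_deriv DERIV_isCont by blast

lemma f1_strict_mono: assumes "0 < a" "a < b" shows "f1 a < f1 b"
  using assms(2)
proof (rule DERIV_pos_imp_increasing)
  fix x assume "a \<le> x" "x \<le> b"
  hence "0 < x" using assms by simp
  thus "\<exists>y. (f1 has_real_derivative y) (at x) \<and> 0 < y" using f1_deriv f1d_pos by blast
qed

lemma f1_inj: "0 < a \<Longrightarrow> 0 < b \<Longrightarrow> f1 a = f1 b \<Longrightarrow> a = b"
  by (metis f1_strict_mono linorder_neqE_linordered_idom order_less_irrefl)

lemma f1_lim0: "(f1 \<longlongrightarrow> 2) (at_right 0)"
proof -
  have "((\<lambda>l::real. l*(exp l - 1)/(exp l - 1 - l)) \<longlongrightarrow> 2) (at_right 0)" by real_asymp
  thus ?thesis unfolding f1_def[abs_def] .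
qed

lemma f1_gt2: assumes "0 < a" shows "2 < f1 a"
proof -
  have "2 \<le> f1 (a/2)"
  proof (rule tendsto_upperbound[OF f1_lim0])
    show "\<forall>\<^sub>F x in at_right 0. f1 x \<le> f1 (a/2)"
      unfolding eventually_at_right_field using assms
      by (intro exI[of _ "a/2"]) (auto intro: less_imp_le[OF f1_strict_mono])
  qed simp
  also have "f1 (a/2) < f1 a" using assms by (intro f1_strict_mono) auto
  finally show ?thesis .
qed

lemma f1_surj: assumes "2 < R" shows "\<exists>l>0. f1 l = R"
proof -
  have "\<forall>\<^sub>F x in at_right 0. f1 x < R" using f1_lim0 assms by (rule order_tendstoD)
  then obtain b where b: "b > 0" "\<And>y. 0 < y \<Longrightarrow> y < b \<Longrightarrow> f1 y < R"
    unfolding eventually_at_right_field by auto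
  define a where "a = min (b/2) R"
  have a: "0 < a" "a < b" "a \<le> R" "f1 a < R" using b assms by (auto simp: a_def)
  have "R \<le> f1 R" using f1_gt_self[of R] assms by simp
  then obtain x where "a \<le> x" "x \<le> R" "f1 x = R"
    using IVT[of f1 a R R] a f1_cont by force
  thus ?thesis using a by (intro exI[of _ x]) auto
qed

definition f1inv :: "real \<Rightarrow> real" where "f1inv R = (THE l. l > 0 \<and> f1 l = R)"

lemma f1inv: assumes "2 < R" shows "0 < f1inv R" "f1 (f1inv R) = R"
proof -
  obtain l where l: "l > 0" "f1 l = R" using f1_surj[OF assms] by blast
  have "f1inv R = l" unfolding f1inv_def
    by (rule the_equality) (use l f1_inj in auto)
  thus "0 < f1inv R" "f1 (f1inv R) = R" using l by auto
qed

lemma f1inv_f1: "0 < l \<Longrightarrow> f1inv (f1 l) = l"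
  using f1inv[of "f1 l"] f1_gt2[of l] f1_inj by auto

lemma f1inv_eqI: "0 < l \<Longrightarrow> f1 l = R \<Longrightarrow> f1inv R = l"
  using f1inv_f1 by auto

lemma f1inv_cont: assumes "2 < R" shows "isCont f1inv R"
proof -
  define x where "x = f1inv R"
  have x: "0 < x" "f1 x = R" using f1inv[OF assms] by (auto simp: x_def)
  have "isCont f1inv (f1 x)"
  proof (rule isCont_inverse_function[where f=f1 and x=x and d="x/2"])
    fix z assume "\<bar>z - x\<bar> \<le> x/2"
    hence "0 < z" using x by arith
    thus "f1inv (f1 z) = z" "isCont f1 z" using f1inv_f1 f1_cont by auto
  qed (use x in simp)
  thus ?thesis using x by simp
qed

lemma f1inv_deriv: assumes "2 < R" shows "(f1inv has_real_derivative inverse (f1d (f1inv R))) (at R)"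
proof (rule DERIV_inverse_function[where a=2 and b="R+1"])
  have p: "0 < f1inv R" using f1inv[OF assms] by simp
  show "(f1 has_real_derivative f1d (f1inv R)) (at (f1inv R))" using f1_deriv[OF p] .
  show "f1d (f1inv R) \<noteq> 0" using f1d_pos[OF p] by simp
  show "isCont f1inv R" using f1inv_cont[OF assms] .
  fix y assume "2 < y" "y < R + 1" thus "f1 (f1inv y) = y" using f1inv by simp
qed (use assms in auto)

lemma lam_x_eq: "lam_x k x \<theta> = f1inv ((real k * (1 - \<theta>) - max (fst x) 0) / snd x)"
  unfolding lam_x_def f1inv_def ..

lemma lam_k_eq: "lam_k k = f1inv (real k)"
  unfolding lam_k_def f1inv_def ..

lemma g_cont: "0 < x \<Longrightarrow> isCont (g_fun k) x"
  unfolding g_fun_def[abs_def] by (intro continuous_intros) auto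

lemma g_cont_on: "continuous_on S (g_fun k)" if "\<forall>x\<in>S. 0 < x"
  using that g_cont by (intro continuous_at_imp_continuous_on) auto

lemma one_m_exp: "0 < x \<Longrightarrow> 0 < 1 - exp (- x) \<and> 1 - exp (-x) < (1::real)"
  by auto

lemma one_m_exp_le: "0 \<le> x \<Longrightarrow> 1 - exp (- x) \<le> (x::real)"
  using exp_ge_add_one_self[of "-x"] by simp

lemma g_pos: "0 < x \<Longrightarrow> 0 < k \<Longrightarrow> 0 < g_fun k x"
  unfolding g_fun_def using one_m_exp[of x] by simp

lemma g_lt: assumes "0 < x" "2 \<le> k" shows "g_fun k x < real k / x"
proof -
  have "(1 - exp (-x)) ^ (k-1) < 1" using one_m_exp[OF assms(1)] assms(2)
    by (intro power_less_one_iff[THEN iffD2]) auto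
  thus ?thesis unfolding g_fun_def using assms by (simp add: divide_strict_right_mono)
qed

lemma g_le_small: assumes "0 < x" "x \<le> 1" "3 \<le> k" shows "g_fun k x \<le> real k * x"
proof -
  have "(1 - exp (-x)) ^ (k-1) \<le> x ^ (k-1)"
    using one_m_exp[OF assms(1)] one_m_exp_le[of x] assms by (intro power_mono) auto
  also have "x ^ (k-1) = x^2 * x ^ (k-3)"
  proof -
    have "k - 1 = 2 + (k - 3)" using assms(3) by simp
    thus ?thesis by (simp only: power_add)
  qed
  also have "\<dots> \<le> x^2 * 1" using assms by (intro mult_left_mono power_le_one) auto
  finally have p: "(1 - exp (-x)) ^ (k-1) \<le> x^2" by simp
  have "g_fun k x = real k * ((1 - exp (-x)) ^ (k-1) / x)" unfolding g_fun_def by simp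
  also have "\<dots> \<le> real k * (x^2 / x)" using p assms(1) by (intro mult_left_mono divide_right_mono) auto
  also have "x^2 / x = x" using assms(1) by (simp add: power2_eq_square)
  finally show ?thesis .
qed

lemma g_max: assumes "3 \<le> k"
  shows "\<exists>xm>0. \<forall>x>0. g_fun k x \<le> g_fun k xm"
proof -
  define v where "v = g_fun k 1"
  have v: "0 < v" "v < real k" unfolding v_def using g_pos[of 1 k] g_lt[of 1 k] assms by auto
  define a where "a = v / (2 * real k)"
  define b where "b = 2 * real k / v"
  have a: "0 < a" "a \<le> 1" using v assms by (auto simp: a_def)
  have b: "1 \<le> b" using v by (auto simp: b_def)
  obtain xm where xm: "xm \<in> {a..b}" "\<And>y. y \<in> {a..b} \<Longrightarrow> g_fun k y \<le> g_fun k xm"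
    using continuous_attains_sup[of "{a..b}" "g_fun k"] a b g_cont_on[of "{a..b}" k] by auto
  have "v \<le> g_fun k xm" using xm(2)[of 1] a b by (auto simp: v_def)
  have "g_fun k x \<le> g_fun k xm" if x: "0 < x" for x
  proof (cases "x \<in> {a..b}")
    case True thus ?thesis using xm by auto
  next
    case False
    hence "x < a \<or> b < x" by auto
    thus ?thesis
    proof
      assume "x < a"
      hence "g_fun k x \<le> real k * x" using g_le_small[of x k] x a assms by auto
      also have "\<dots> \<le> real k * a" using \<open>x < a\<close> by (intro mult_left_mono) auto
      also have "\<dots> < v" using v assms by (simp add: a_def)
      finally show ?thesis using \<open>v \<le> g_fun k xm\<close> by simp
    next
      assume "b < x"
      have "g_fun k x < real k / x" using g_lt[of x k] x assms by auto
      also have "real k / x \<le> real k / b" using \<open>b < x\<close> b by (intro divide_left_mono) auto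
      also have "real k / b < v" using v by (simp add: b_def)
      finally show ?thesis using \<open>v \<le> g_fun k xm\<close> by simp
    qed
  qed
  moreover have "xm > 0" using xm a by auto
  ultimately show ?thesis by blast
qed

lemma M_k_eq: assumes "3 \<le> k"
  obtains xm where "xm > 0" "M_k k = g_fun k xm" "\<And>x. x > 0 \<Longrightarrow> g_fun k x \<le> M_k k"
proof -
  obtain xm where xm: "xm > 0" "\<forall>x>0. g_fun k x \<le> g_fun k xm" using g_max[OF assms] by blast
  have "M_k k = g_fun k xm" unfolding M_k_def
    by (rule cSup_eq_maximum) (use xm in auto)
  thus ?thesis using that xm by auto
qed

lemma lam_rho_char: assumes k: "3 \<le> k" and r: "0 < \<rho>" "\<rho> \<le> M_k k"
  shows "0 < lam_rho k \<rho>" "g_fun k (lam_rho k \<rho>) = \<rho>"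
    "\<And>x. 0 < x \<Longrightarrow> \<rho> \<le> g_fun k x \<Longrightarrow> x \<le> lam_rho k \<rho>"
proof -
  obtain xm where xm: "xm > 0" "M_k k = g_fun k xm" "\<And>x. x > 0 \<Longrightarrow> g_fun k x \<le> M_k k"
    using M_k_eq[OF k] by blast
  define L where "L = {x. 0 < x \<and> \<rho> \<le> g_fun k x}"
  have xmL: "xm \<in> L" using xm r by (auto simp: L_def)
  have Lb: "x \<le> real k / \<rho>" if "x \<in> L" for x
  proof -
    have x: "0 < x" "\<rho> \<le> g_fun k x" using that by (auto simp: L_def)
    hence "\<rho> < real k / x" using g_lt[of x k] k by auto
    hence "\<rho> * x < real k" using x by (simp add: field_simps)
    thus ?thesis using r x by (simp add: field_simps)
  qed
  have bdd: "bdd_above L" using Lb by (auto simp: bdd_above_def)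
  have ne: "L \<noteq> {}" using xmL by auto
  define lm where "lm = Sup L"
  have ub: "x \<le> lm" if "x \<in> L" for x using cSup_upper[OF that bdd] by (simp add: lm_def)
  have lm_pos: "0 < lm" using ub[OF xmL] xm by simp
  have ge: "\<rho> \<le> g_fun k lm"
  proof (rule ccontr)
    assume "\<not> \<rho> \<le> g_fun k lm"
    hence lt: "g_fun k lm < \<rho>" by simp
    have "(g_fun k \<longlongrightarrow> g_fun k lm) (at lm)" using g_cont[OF lm_pos] by (simp add: isCont_def)
    hence "\<forall>\<^sub>F x in at lm. g_fun k x < \<rho>" using lt by (rule order_tendstoD(2))
    then obtain d where d: "d > 0" "\<And>x. x \<noteq> lm \<Longrightarrow> dist x lm < d \<Longrightarrow> g_fun k x < \<rho>"
      unfolding eventually_at by auto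
    have "lm - d < Sup L" using d by (simp add: lm_def)
    then obtain x where x: "x \<in> L" "lm - d < x" using less_cSup_iff[OF ne bdd] by auto
    have "x \<le> lm" using ub[OF x(1)] .
    show False
    proof (cases "x = lm")
      case True thus False using x(1) lt by (auto simp: L_def)
    next
      case False
      hence "g_fun k x < \<rho>" using d(2)[of x] x \<open>x \<le> lm\<close> by (auto simp: dist_real_def)
      thus False using x(1) by (auto simp: L_def)
    qed
  qed
  have le: "g_fun k lm \<le> \<rho>"
  proof (rule ccontr)
    assume "\<not> g_fun k lm \<le> \<rho>"
    hence lt: "\<rho> < g_fun k lm" by simp
    have "(g_fun k \<longlongrightarrow> g_fun k lm) (at lm)" using g_cont[OF lm_pos] by (simp add: isCont_def)
    hence "\<forall>\<^sub>F x in at lm. \<rho> < g_fun k x" using lt by (rule order_tendstoD(1))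
    then obtain d where d: "d > 0" "\<And>x. x \<noteq> lm \<Longrightarrow> dist x lm < d \<Longrightarrow> \<rho> < g_fun k x"
      unfolding eventually_at by auto
    have "\<rho> < g_fun k (lm + d/2)" using d by (intro d(2)) (auto simp: dist_real_def)
    hence "lm + d/2 \<in> L" using lm_pos d by (auto simp: L_def)
    thus False using ub[of "lm + d/2"] d by simp
  qed
  have eq: "g_fun k lm = \<rho>" using ge le by simp
  have "lam_rho k \<rho> = lm" unfolding lam_rho_def
    by (rule Greatest_equality) (use lm_pos eq ub in \<open>auto simp: L_def\<close>)
  thus "0 < lam_rho k \<rho>" "g_fun k (lam_rho k \<rho>) = \<rho>"
    "\<And>x. 0 < x \<Longrightarrow> \<rho> \<le> g_fun k x \<Longrightarrow> x \<le> lam_rho k \<rho>"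
    using lm_pos eq ub by (auto simp: L_def)
qed

definition gd :: "nat \<Rightarrow> real \<Rightarrow> real" where
  "gd k x = real k * (real (k-1) * (1 - exp (-x))^(k-2) * exp (-x) * x - (1 - exp (-x))^(k-1)) / x^2"

lemma g_deriv: assumes "0 < x" "2 \<le> k" shows "(g_fun k has_real_derivative gd k x) (at x)"
proof -
  have "(g_fun k has_real_derivative
     (real k * (real (k-1) * (1 - exp (-x))^(k-1-1) * (exp (-x))) * x - real k * (1 - exp (-x))^(k-1)) / (x * x)) (at x)"
    unfolding g_fun_def[abs_def] using assms(1)
    by (auto intro!: derivative_eq_intros simp: power2_eq_square)
  moreover have "k - 1 - 1 = k - 2" by simp
  ultimately show ?thesis unfolding gd_def by (simp add: power2_eq_square algebra_simps)
qed

lemma gd_neg: assumes "0 < x" "3 \<le> k" "real (k-1) * x < exp x - 1" shows "gd k x < 0"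
proof -
  define q where "q = 1 - exp (-x)"
  have q: "0 < q" using assms by (simp add: q_def)
  have ex: "exp x * exp (-x) = 1" by (simp add: exp_minus)
  have "real (k-1) * x * exp (-x) < (exp x - 1) * exp (-x)"
    using assms(3) by (intro mult_strict_right_mono) auto
  also have "(exp x - 1) * exp (-x) = q" using ex by (simp add: q_def algebra_simps)
  finally have a: "real (k-1) * exp (-x) * x - q < 0" by (simp add: algebra_simps)
  have "q^(k-1) = q^(k-2) * q"
  proof -
    have "k - 1 = Suc (k - 2)" using assms(2) by simp
    thus ?thesis by (simp only: power_Suc mult.commute)
  qed
  hence "real (k-1) * q^(k-2) * exp (-x) * x - q^(k-1) = q^(k-2) * (real (k-1) * exp (-x) * x - q)"
    by (simp add: algebra_simps)
  also have "\<dots> < 0" using a q by (simp add: mult_pos_neg)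
  finally have "real (k-1) * q^(k-2) * exp (-x) * x - q^(k-1) < 0" .
  hence "real k * (real (k-1) * q^(k-2) * exp (-x) * x - q^(k-1)) < 0"
    using assms by (simp add: mult_pos_neg)
  thus ?thesis unfolding gd_def q_def[symmetric] using assms(1) by (simp add: divide_neg_pos)
qed

lemma g_decr: assumes "3 \<le> k" "0 < a" "a < b" "\<And>x. a \<le> x \<Longrightarrow> x \<le> b \<Longrightarrow> real (k-1) * x < exp x - 1"
  shows "g_fun k b < g_fun k a"
  using assms(3)
proof (rule DERIV_neg_imp_decreasing)
  fix x assume x: "a \<le> x" "x \<le> b"
  hence "0 < x" using assms by simp
  thus "\<exists>y. (g_fun k has_real_derivative y) (at x) \<and> y < 0"
    using g_deriv[of x k] gd_neg[of x k] assms x by auto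
qed

lemma key_ineq: assumes "3 \<le> k"
  shows "real k * (real k - 2) + 1 < exp (real k * (real k - 2) / (real k - 1))"
proof -
  define K where "K = real k"
  have K: "3 \<le> K" using assms by (simp add: K_def)
  define m where "m = K - 3/2"
  define \<mu> where "\<mu> = K * (K - 2) / (K - 1)"
  have m: "0 < m" using K by (simp add: m_def)
  have "\<mu> - m = (K/2 - 3/2) / (K - 1)" using K unfolding \<mu>_def m_def by (simp add: field_simps)
  also have "\<dots> \<ge> 0" using K by simp
  finally have mu: "m \<le> \<mu>" by simp
  have "1 + m + m^2/2 + m^3/6 \<le> exp m" by (rule exp_cubic_lt[OF m])
  also have "exp m \<le> exp \<mu>" using mu by simp
  finally have e: "1 + m + m^2/2 + m^3/6 \<le> exp \<mu>" .
  have id: "m^3 - 3*m^2 + 4 = (m-2)^2*(m+1)" by (simp add: algebra_simps power2_eq_square power3_eq_cube)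
  have "(m-2)^2*(m+1) \<ge> 0" using m by simp
  hence p: "m^3 - 3*m^2 + 4 \<ge> 0" using id by simp
  have kk: "K * (K - 2) + 1 = m^2 + m + 1/4" unfolding m_def by (simp add: algebra_simps power2_eq_square)
  have "K * (K - 2) + 1 < 1 + m + m^2/2 + m^3/6" using p kk by simp
  with e show ?thesis unfolding K_def[symmetric] \<mu>_def[symmetric] by simp
qed

lemma lamk_facts: assumes k: "3 \<le> k"
  shows "0 < lam_k k" "f1 (lam_k k) = real k" "lam_k k < real k"
    "real (k-1) * lam_k k < exp (lam_k k) - 1" "1 < lam_k k"
proof -
  define K where "K = real k"
  have K: "3 \<le> K" using k by (simp add: K_def)
  have l: "0 < lam_k k" "f1 (lam_k k) = K" using f1inv[of K] K unfolding lam_k_eq K_def by auto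
  show "0 < lam_k k" "f1 (lam_k k) = real k" using l by (auto simp: K_def)
  show "lam_k k < real k" using f1_gt_self[OF l(1)] l(2) by (simp add: K_def)
  define \<mu> where "\<mu> = K * (K - 2) / (K - 1)"
  have mu: "0 < \<mu>" using K by (simp add: \<mu>_def)
  have Kmu: "K - \<mu> = K / (K - 1)" using K by (simp add: \<mu>_def field_simps)
  have ki: "K * (K - 2) < exp \<mu> - 1" using key_ineq[OF k] by (simp add: K_def \<mu>_def)
  have "f1 \<mu> < K"
  proof -
    have E: "0 < exp \<mu> - 1 - \<mu>" using EE_pos[OF mu] by (simp add: EE_def)
    have "K * \<mu> = (K / (K - 1)) * (K * (K - 2))" using K by (simp add: \<mu>_def field_simps)
    also have "\<dots> < (K / (K - 1)) * (exp \<mu> - 1)" using ki K by (intro mult_strict_left_mono) auto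
    also have "\<dots> = (K - \<mu>) * (exp \<mu> - 1)" using Kmu by simp
    finally have "\<mu> * (exp \<mu> - 1) < K * (exp \<mu> - 1 - \<mu>)" by (simp add: algebra_simps)
    thus ?thesis unfolding f1_def using E by (simp add: divide_less_eq)
  qed
  have gt: "\<mu> < lam_k k"
  proof (rule ccontr)
    assume "\<not> \<mu> < lam_k k"
    hence "lam_k k < \<mu> \<or> lam_k k = \<mu>" by auto
    hence "f1 (lam_k k) \<le> f1 \<mu>" using f1_strict_mono[OF l(1), of \<mu>] by auto
    thus False using \<open>f1 \<mu> < K\<close> l by simp
  qed
  have "1 \<le> \<mu>"
  proof -
    have a: "0 \<le> K * (K - 3)" using K by simp
    have b: "K * (K - 2) = K * (K - 3) + K" by (simp add: algebra_simps)
    have "K - 1 \<le> K * (K - 2)" using a b by linarith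
    thus ?thesis using K by (simp add: \<mu>_def field_simps)
  qed
  thus "1 < lam_k k" using gt by simp
  define L where "L = lam_k k"
  have L: "0 < L" "f1 L = K" "\<mu> < L" using l gt by (auto simp: L_def)
  have EL: "0 < exp L - 1 - L" using EE_pos[OF L(1)] by (simp add: EE_def)
  have eqn: "(K - L) * (exp L - 1) = K * L"
  proof -
    have "L * (exp L - 1) = K * (exp L - 1 - L)" using L(2) EL unfolding f1_def by (simp add: divide_eq_eq)
    thus ?thesis by (simp add: algebra_simps)
  qed
  have KL: "0 < K - L" using f1_gt_self[OF L(1)] L(2) by simp
  have "(K - 1) * (K - L) < K"
  proof -
    have "(K - 1) * (K - L) = (K-1) * K - (K-1) * L" by (simp add: algebra_simps)
    also have "\<dots> < (K-1) * K - (K-1) * \<mu>" using L(3) K by simp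
    also have "(K-1) * \<mu> = K * (K-2)" using K by (simp add: \<mu>_def)
    finally show ?thesis by (simp add: algebra_simps)
  qed
  hence "((K - 1) * L) * (K - L) < K * L" using L(1) by (simp add: mult.commute mult.left_commute)
  hence "((K - 1) * L) * (K - L) < (exp L - 1) * (K - L)" using eqn by (simp add: mult.commute)
  hence "(K - 1) * L < exp L - 1" using KL by simp
  thus "real (k-1) * lam_k k < exp (lam_k k) - 1" using k by (simp add: K_def L_def of_nat_diff)
qed

lemma lamk_beyond: assumes k: "3 \<le> k" and x: "lam_k k \<le> x"
  shows "real (k-1) * x < exp x - 1"
proof -
  define L where "L = lam_k k"
  have L: "0 < L" "real (k-1) * L < exp L - 1" "1 < L" using lamk_facts[OF k] by (auto simp: L_def)
  have xL: "0 \<le> x - L" using x by (simp add: L_def)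
  have "real (k-1) * 1 \<le> real (k-1) * L" using L by (intro mult_left_mono) auto
  hence eL: "real (k-1) < exp L" using L by simp
  have "exp x = exp L * exp (x - L)" by (simp add: exp_diff)
  also have "\<dots> \<ge> exp L * (1 + (x - L))" by (intro mult_left_mono) auto
  finally have ex: "exp L * (1 + (x - L)) \<le> exp x" .
  have "(x - L) * real (k-1) \<le> (x - L) * exp L" using xL eL by (intro mult_left_mono) auto
  hence "real (k-1) * x \<le> real (k-1) * L + (x - L) * exp L" by (simp add: algebra_simps)
  also have "\<dots> < exp L - 1 + (x - L) * exp L" using L by simp
  also have "\<dots> = exp L * (1 + (x - L)) - 1" by (simp add: algebra_simps)
  also have "\<dots> \<le> exp x - 1" using ex by simp
  finally show ?thesis .
qed

lemma rhok_facts: assumes k: "3 \<le> k"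
  shows "rho_k k = g_fun k (lam_k k)" "0 < rho_k k" "rho_k k \<le> M_k k" "lam_rho k (rho_k k) = lam_k k"
proof -
  have L: "0 < lam_k k" using lamk_facts[OF k] by simp
  show r: "rho_k k = g_fun k (lam_k k)" unfolding rho_k_def g_fun_def ..
  show rp: "0 < rho_k k" using r g_pos[OF L, of k] k by simp
  obtain xm where xm: "xm > 0" "M_k k = g_fun k xm" "\<And>x. x > 0 \<Longrightarrow> g_fun k x \<le> M_k k"
    using M_k_eq[OF k] by blast
  show rM: "rho_k k \<le> M_k k" using xm(3)[OF L] r by simp
  note c = lam_rho_char[OF k rp rM]
  have ge: "lam_k k \<le> lam_rho k (rho_k k)" using c(3)[OF L] r by simp
  show "lam_rho k (rho_k k) = lam_k k"
  proof (rule ccontr)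
    assume "lam_rho k (rho_k k) \<noteq> lam_k k"
    hence lt: "lam_k k < lam_rho k (rho_k k)" using ge by simp
    have "g_fun k (lam_rho k (rho_k k)) < g_fun k (lam_k k)"
      by (rule g_decr[OF k L lt]) (use lamk_beyond[OF k] in auto)
    thus False using c(2) r by simp
  qed
qed

lemma u_facts: assumes "\<theta> < 1" "0 < k"
  shows "0 < u_fun k \<theta>" "(u_fun k \<theta>) ^ k = 1 - \<theta>"
proof -
  show p: "0 < u_fun k \<theta>" using assms by (simp add: u_fun_def)
  have "(u_fun k \<theta>) ^ k = u_fun k \<theta> powr real k" using p by (simp add: powr_realpow)
  also have "\<dots> = (1 - \<theta>) powr (1 / real k * real k)" unfolding u_fun_def by (simp add: powr_powr)
  also have "\<dots> = 1 - \<theta>" using assms by simp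
  finally show "(u_fun k \<theta>) ^ k = 1 - \<theta>" .
qed

lemma u_le1: assumes "0 \<le> \<theta>" "\<theta> < 1" "0 < k" shows "u_fun k \<theta> \<le> 1"
proof -
  have "(u_fun k \<theta>) ^ k \<le> 1 ^ k" using u_facts[OF assms(2,3)] assms by simp
  thus ?thesis using u_facts[OF assms(2,3)] assms(3) power_mono_iff[of "u_fun k \<theta>" 1 k] by simp
qed

lemma u_of_pow: assumes "0 < v" "0 < k" shows "u_fun k (1 - v ^ k) = v"
proof -
  have "u_fun k (1 - v^k) = (v powr real k) powr (1 / real k)" unfolding u_fun_def using assms
    by (simp add: powr_realpow)
  also have "\<dots> = v" using assms by (simp add: powr_powr)
  finally show ?thesis .
qed

lemma h_le_iff: assumes "0 < v" "v \<le> 1" "0 < \<rho>" "2 \<le> k"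
  shows "h_fun k \<rho> v \<le> 0 \<longleftrightarrow> \<rho> \<le> g_fun k (real k * v^(k-1) / \<rho>)"
proof -
  define l where "l = real k * v^(k-1) / \<rho>"
  have l: "0 < l" using assms by (simp add: l_def)
  have vl: "v^(k-1) = \<rho> * l / real k" using assms by (simp add: l_def)
  have "h_fun k \<rho> v = v - 1 + exp (- l)" unfolding h_fun_def l_def by simp
  hence "h_fun k \<rho> v \<le> 0 \<longleftrightarrow> v \<le> 1 - exp (-l)" by auto
  also have "\<dots> \<longleftrightarrow> v^(k-1) \<le> (1 - exp (-l))^(k-1)"
    using assms l by (intro power_mono_iff[symmetric]) auto
  also have "\<dots> \<longleftrightarrow> \<rho> * l / real k \<le> (1 - exp (-l))^(k-1)" using vl by simp
  also have "\<dots> \<longleftrightarrow> \<rho> \<le> real k * (1 - exp (-l))^(k-1) / l"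
    using assms l by (simp add: field_simps)
  finally show ?thesis unfolding g_fun_def l_def .
qed

definition SS :: "nat \<Rightarrow> real \<Rightarrow> real set" where
  "SS k \<rho> = {\<theta>. \<theta> \<ge> 0 \<and> h_fun k \<rho> (u_fun k \<theta>) \<le> 0}"

lemma theta_star_SS: "theta_star k \<rho> = Inf (SS k \<rho>)"
  unfolding theta_star_def SS_def ..

lemma one_in_SS: assumes "2 \<le> k" shows "1 \<in> SS k \<rho>"
proof -
  have "u_fun k 1 = 0" by (simp add: u_fun_def)
  moreover have "(0::real) ^ (k-1) = 0" using assms by simp
  ultimately have "h_fun k \<rho> (u_fun k 1) = 0" unfolding h_fun_def by simp
  thus ?thesis unfolding SS_def by simp
qed

lemma SS_bdd: "bdd_below (SS k \<rho>)"
  unfolding SS_def bdd_below_def by auto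

lemma below_theta_star: assumes "0 \<le> \<theta>" "\<theta> < theta_star k \<rho>"
  shows "0 < h_fun k \<rho> (u_fun k \<theta>)"
proof (rule ccontr)
  assume "\<not> 0 < h_fun k \<rho> (u_fun k \<theta>)"
  hence "\<theta> \<in> SS k \<rho>" using assms by (auto simp: SS_def)
  hence "theta_star k \<rho> \<le> \<theta>" unfolding theta_star_SS by (rule cInf_lower[OF _ SS_bdd])
  thus False using assms by simp
qed

lemma theta_star_big: assumes k: "3 \<le> k" and r: "0 < \<rho>" "M_k k < \<rho>"
  shows "theta_star k \<rho> = 1"
proof -
  obtain xm where xm: "xm > 0" "M_k k = g_fun k xm" "\<And>x. x > 0 \<Longrightarrow> g_fun k x \<le> M_k k"
    using M_k_eq[OF k] by blast
  have "1 \<le> \<theta>" if "\<theta> \<in> SS k \<rho>" for \<theta>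
  proof (rule ccontr)
    assume "\<not> 1 \<le> \<theta>"
    hence t: "0 \<le> \<theta>" "\<theta> < 1" using that by (auto simp: SS_def)
    have v: "0 < u_fun k \<theta>" "u_fun k \<theta> \<le> 1" using u_facts[OF t(2)] u_le1[OF t] k by auto
    have "h_fun k \<rho> (u_fun k \<theta>) \<le> 0" using that by (simp add: SS_def)
    hence "\<rho> \<le> g_fun k (real k * (u_fun k \<theta>)^(k-1) / \<rho>)" using h_le_iff[OF v r(1)] k by simp
    also have "\<dots> \<le> M_k k" using v r k by (intro xm(3)) simp
    finally show False using r by simp
  qed
  thus ?thesis unfolding theta_star_SS using one_in_SS[of k \<rho>] k
    by (intro cInf_eq_minimum) auto
qed

lemma theta_star_small: assumes k: "3 \<le> k" and r: "0 < \<rho>" "\<rho> \<le> M_k k"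
  shows "theta_star k \<rho> = 1 - (1 - exp (- lam_rho k \<rho>)) ^ k"
    "u_fun k (theta_star k \<rho>) = 1 - exp (- lam_rho k \<rho>)"
    "h_fun k \<rho> (u_fun k (theta_star k \<rho>)) = 0"
    "0 < theta_star k \<rho>" "theta_star k \<rho> < 1"
proof -
  note c = lam_rho_char[OF k r]
  define lm where "lm = lam_rho k \<rho>"
  define u0 where "u0 = 1 - exp (- lm)"
  have lm: "0 < lm" using c by (simp add: lm_def)
  have u0: "0 < u0" "u0 < 1" using lm by (auto simp: u0_def)
  have rho_eq: "\<rho> = real k * u0^(k-1) / lm" using c(2) unfolding g_fun_def lm_def u0_def by simp
  hence lm_eq: "real k * u0^(k-1) / \<rho> = lm" using lm r u0 by (simp add: field_simps)
  define t0 where "t0 = 1 - u0 ^ k"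
  have ut0: "u_fun k t0 = u0" unfolding t0_def using u0 k by (intro u_of_pow) auto
  have u0k: "u0 ^ k < 1" using u0 k by (simp add: power_less_one_iff)
  have t0: "0 < t0" "t0 < 1" using u0k u0 by (auto simp: t0_def)
  have h0: "h_fun k \<rho> u0 = 0" unfolding h_fun_def using lm_eq by (simp add: u0_def)
  have "t0 \<in> SS k \<rho>" using t0 ut0 h0 by (simp add: SS_def)
  moreover have "t0 \<le> \<theta>" if "\<theta> \<in> SS k \<rho>" for \<theta>
  proof (cases "\<theta> < 1")
    case False thus ?thesis using t0 by simp
  next
    case True
    have t: "0 \<le> \<theta>" using that by (simp add: SS_def)
    define v where "v = u_fun k \<theta>"
    have v: "0 < v" "v \<le> 1" "v^k = 1 - \<theta>" using u_facts[OF True] u_le1[OF t True] k by (auto simp: v_def)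
    have "h_fun k \<rho> v \<le> 0" using that by (simp add: SS_def v_def)
    hence "\<rho> \<le> g_fun k (real k * v^(k-1) / \<rho>)" using h_le_iff[OF v(1,2) r(1)] k by simp
    hence "real k * v^(k-1) / \<rho> \<le> lm" unfolding lm_def using v r k by (intro c(3)) auto
    hence "real k * v^(k-1) / \<rho> \<le> real k * u0^(k-1) / \<rho>" using lm_eq by simp
    hence "v^(k-1) \<le> u0^(k-1)" using r k by (simp add: divide_right_mono_neg field_simps)
    hence "v \<le> u0" using v u0 k power_mono_iff[of v u0 "k-1"] by simp
    hence "v^k \<le> u0^k" using v by (intro power_mono) auto
    thus ?thesis using v by (simp add: t0_def)
  qed
  ultimately have ts: "theta_star k \<rho> = t0" unfolding theta_star_SS by (intro cInf_eq_minimum) auto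
  show "theta_star k \<rho> = 1 - (1 - exp (- lam_rho k \<rho>)) ^ k" using ts by (simp add: t0_def u0_def lm_def)
  show "u_fun k (theta_star k \<rho>) = 1 - exp (- lam_rho k \<rho>)" using ts ut0 by (simp add: u0_def lm_def)
  show "h_fun k \<rho> (u_fun k (theta_star k \<rho>)) = 0" using ts ut0 h0 by simp
  show "0 < theta_star k \<rho>" "theta_star k \<rho> < 1" using ts t0 by auto
qed

lemma vd_fst: "(f has_vector_derivative D) F \<Longrightarrow> ((\<lambda>t. fst (f t)) has_real_derivative fst D) F"
  unfolding has_vector_derivative_def has_field_derivative_def
  apply (drule has_derivative_fst)
  apply (erule has_derivative_eq_rhs)
  by (auto simp: fun_eq_iff)

lemma vd_snd: "(f has_vector_derivative D) F \<Longrightarrow> ((\<lambda>t. snd (f t)) has_real_derivative snd D) F"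
  unfolding has_vector_derivative_def has_field_derivative_def
  apply (drule has_derivative_snd)
  apply (erule has_derivative_eq_rhs)
  by (auto simp: fun_eq_iff)

lemma vd_pair: assumes "((\<lambda>t. fst (f t)) has_real_derivative A) (at x within s)"
    "((\<lambda>t. snd (f t)) has_real_derivative B) (at x within s)"
  shows "(f has_vector_derivative (A, B)) (at x within s)"
proof -
  have "((\<lambda>t. (fst (f t), snd (f t))) has_vector_derivative (A, B)) (at x within s)"
    using assms unfolding has_real_derivative_iff_has_vector_derivative
    by (rule has_vector_derivative_Pair)
  thus ?thesis by simp
qed

definition Qf :: "real \<Rightarrow> real" where "Qf l = l^2 / EE l"
definition Qd :: "real \<Rightarrow> real" where "Qd l = (2 * l * EE l - l^2 * (exp l - 1)) / (EE l)^2"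

lemma Q_deriv: assumes "0 < l" shows "(Qf has_real_derivative Qd l) (at l)"
proof -
  have E: "exp l - 1 - l \<noteq> 0" using EE_pos[OF assms] by (simp add: EE_def)
  have "((\<lambda>l. l^2 / (exp l - 1 - l)) has_real_derivative
      ((2 * l) * (exp l - 1 - l) - l^2 * (exp l - 1)) / (exp l - 1 - l)^2) (at l)"
    using E by (auto intro!: derivative_eq_intros simp: power2_eq_square)
  thus ?thesis unfolding Qf_def[abs_def] Qd_def EE_def by simp
qed

lemma Q_cont: "0 < l \<Longrightarrow> isCont Qf l" using Q_deriv DERIV_isCont by blast
lemma Qd_cont: assumes "0 < l" shows "isCont Qd l"
proof -
  have "EE l \<noteq> 0" using EE_pos[OF assms] by simp
  thus ?thesis unfolding Qd_def[abs_def] EE_def[abs_def] by (intro continuous_intros) auto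
qed
lemma f1d_cont: assumes "0 < l" shows "isCont f1d l"
proof -
  have "EE l \<noteq> 0" using EE_pos[OF assms] by simp
  thus ?thesis unfolding f1d_def[abs_def] EE_def[abs_def] by (intro continuous_intros) auto
qed

locale traj =
  fixes k :: nat and Y :: "real \<Rightarrow> real \<times> real"
  assumes k3: "3 \<le> k"
    and der: "\<And>\<theta>. \<theta> \<in> {0..<1} \<Longrightarrow> (Y has_vector_derivative F_vec k (Y \<theta>) \<theta>) (at \<theta> within {0..<1})"
    and dom: "\<And>\<theta>. \<theta> \<in> {0..<1} \<Longrightarrow> dom_ok k \<theta> (Y \<theta>)"
begin

definition "a t = fst (Y t)"
definition "b t = snd (Y t)"
definition "T t = real k * (1 - t)"
definition "R t = (T t - max (a t) 0) / b t"
definition "L t = f1inv (R t)"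
definition "P1 t = p1 k (Y t) t"
definition "P0 t = p0 k (Y t) t"
definition "A1 t = -1 + (real k - 1) * (P1 t - P0 t)"
definition "B1 t = - (real k - 1) * P1 t"

lemma L_eq: "L t = lam_x k (Y t) t"
  unfolding L_def lam_x_eq R_def T_def a_def b_def ..

lemma P0_eq: "P0 t = max (a t) 0 / T t"
  unfolding P0_def p0_def a_def T_def ..

lemma P1_eq: "b t \<noteq> 0 \<Longrightarrow> P1 t = b t * Qf (L t) / T t"
  unfolding P1_def p1_def Qf_def EE_def L_eq b_def T_def by simp

lemma F_eq: "F_vec k (Y t) t = (A1 t, B1 t)"
  unfolding F_vec_def A1_def B1_def P1_def P0_def ..

lemma T_pos: "t < 1 \<Longrightarrow> 0 < T t"
  using k3 by (simp add: T_def)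

lemma der_J: assumes "J \<subseteq> {0..<1}" "t \<in> J"
  shows "(a has_real_derivative A1 t) (at t within J)" "(b has_real_derivative B1 t) (at t within J)"
proof -
  have "(Y has_vector_derivative (A1 t, B1 t)) (at t within J)"
    using has_vector_derivative_within_subset[OF der[of t] assms(1)] assms F_eq[of t] by auto
  thus "(a has_real_derivative A1 t) (at t within J)" "(b has_real_derivative B1 t) (at t within J)"
    unfolding a_def[abs_def] b_def[abs_def] by (auto dest: vd_fst vd_snd)
qed

lemma Y_cont: "continuous_on {0..<1} Y"
  unfolding continuous_on_eq_continuous_within using der has_vector_derivative_continuous by blast

lemma a_cont: "continuous_on {0..<1} a" and b_cont: "continuous_on {0..<1} b"
  unfolding a_def[abs_def] b_def[abs_def] using Y_cont by (auto intro: continuous_intros)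

end

context traj begin

lemma T_der: "(T has_real_derivative - real k) (at t within J)"
  unfolding T_def[abs_def] by (auto intro!: derivative_eq_intros)

lemma cont_basic: assumes J: "J \<subseteq> {0..<1}" and pos: "\<And>s. s \<in> J \<Longrightarrow> 0 < b s \<and> 2 < R s"
  shows "continuous_on J a" "continuous_on J b" "continuous_on J T" "continuous_on J R"
    "continuous_on J L" "continuous_on J (\<lambda>s. Qf (L s))" "continuous_on J (\<lambda>s. Qd (L s))"
    "continuous_on J (\<lambda>s. f1d (L s))" "continuous_on J P1" "continuous_on J P0"
    "continuous_on J A1" "continuous_on J B1"
proof -
  show ca: "continuous_on J a" using continuous_on_subset[OF a_cont J] .
  show cb: "continuous_on J b" using continuous_on_subset[OF b_cont J] .
  show cT: "continuous_on J T" unfolding T_def[abs_def] by (intro continuous_intros)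
  have Tpos: "s \<in> J \<Longrightarrow> 0 < T s" for s using J T_pos by auto
  have Tnz: "\<forall>s\<in>J. T s \<noteq> 0" using Tpos by (simp add: less_imp_neq[symmetric])
  have bnz: "\<forall>s\<in>J. b s \<noteq> 0" using pos by (simp add: less_imp_neq[symmetric])
  show cR: "continuous_on J R" unfolding R_def[abs_def] using ca cb cT bnz
    by (intro continuous_intros) auto
  have Lpos: "s \<in> J \<Longrightarrow> 0 < L s" for s using pos f1inv unfolding L_def by auto
  show cL: "continuous_on J L" unfolding continuous_on_eq_continuous_within
  proof
    fix s assume s: "s \<in> J"
    have "continuous (at s within J) R" using cR s by (simp add: continuous_on_eq_continuous_within)
    from continuous_within_compose3[OF f1inv_cont this] pos[OF s]
    show "continuous (at s within J) L" unfolding L_def[abs_def] by simp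
  qed
  have comp: "continuous_on J (\<lambda>s. g (L s))" if g: "\<And>l. 0 < l \<Longrightarrow> isCont g l" for g
    unfolding continuous_on_eq_continuous_within
  proof
    fix s assume s: "s \<in> J"
    have "continuous (at s within J) L" using cL s by (simp add: continuous_on_eq_continuous_within)
    from continuous_within_compose3[OF g[OF Lpos[OF s]] this]
    show "continuous (at s within J) (\<lambda>s. g (L s))" .
  qed
  show cQ: "continuous_on J (\<lambda>s. Qf (L s))" by (rule comp[OF Q_cont])
  show "continuous_on J (\<lambda>s. Qd (L s))" by (rule comp[OF Qd_cont])
  show "continuous_on J (\<lambda>s. f1d (L s))" by (rule comp[OF f1d_cont])
  have "continuous_on J (\<lambda>s. b s * Qf (L s) / T s)" using cb cQ cT Tnz by (intro continuous_intros) auto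
  moreover have "continuous_on J P1 \<longleftrightarrow> continuous_on J (\<lambda>s. b s * Qf (L s) / T s)"
    by (rule continuous_on_cong) (use P1_eq bnz in auto)
  ultimately show cP1: "continuous_on J P1" by simp
  have "continuous_on J (\<lambda>s. max (a s) 0 / T s)" using ca cT Tnz by (intro continuous_intros) auto
  thus cP0: "continuous_on J P0" using P0_eq by simp
  show "continuous_on J A1" unfolding A1_def[abs_def] using cP1 cP0 by (intro continuous_intros)
  show "continuous_on J B1" unfolding B1_def[abs_def] using cP1 by (intro continuous_intros)
qed

definition "Rd md t = ((- real k - md) * b t - (T t - max (a t) 0) * B1 t) / (b t)^2"
definition "Ld md t = Rd md t / f1d (L t)"
definition "P1d md t = ((B1 t * Qf (L t) + b t * (Qd (L t) * Ld md t)) * T t + b t * Qf (L t) * real k) / (T t)^2"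

lemma traj_der: assumes J: "J \<subseteq> {0..<1}" "t \<in> J" and pos: "\<And>s. s \<in> J \<Longrightarrow> 0 < b s \<and> 2 < R s"
    and m: "\<And>s. s \<in> J \<Longrightarrow> max (a s) 0 = m s" "(m has_real_derivative md) (at t within J)"
  shows "(R has_real_derivative Rd md t) (at t within J)"
    "(L has_real_derivative Ld md t) (at t within J)"
    "(P1 has_real_derivative P1d md t) (at t within J)"
proof -
  have bt: "b t \<noteq> 0" using pos[OF J(2)] by simp
  have Tt: "T t \<noteq> 0" using T_pos[of t] J by auto
  note dj = der_J[OF J(1,2)]
  have "((\<lambda>s. (T s - m s) / b s) has_real_derivative
      ((- real k - md) * b t - (T t - m t) * B1 t) / (b t * b t)) (at t within J)"
    by (rule DERIV_divide[OF DERIV_diff[OF T_der m(2)] dj(2) bt])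
  hence "((\<lambda>s. (T s - m s) / b s) has_real_derivative Rd md t) (at t within J)"
    unfolding Rd_def using m(1)[OF J(2)] by (simp add: power2_eq_square)
  thus dR: "(R has_real_derivative Rd md t) (at t within J)"
    by (rule has_field_derivative_transform_within[where d=1]) (use J m(1) in \<open>auto simp: R_def\<close>)
  have Rt: "2 < R t" using pos J by auto
  have "((\<lambda>s. f1inv (R s)) has_real_derivative inverse (f1d (f1inv (R t))) * Rd md t) (at t within J)"
    by (rule DERIV_chain2[OF f1inv_deriv[OF Rt] dR])
  thus dL: "(L has_real_derivative Ld md t) (at t within J)"
    unfolding Ld_def L_def[abs_def] by (simp add: divide_inverse mult.commute)
  have Lt: "0 < L t" using f1inv[OF Rt] by (simp add: L_def)
  have dQ: "((\<lambda>s. Qf (L s)) has_real_derivative Qd (L t) * Ld md t) (at t within J)"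
    by (rule DERIV_chain2[OF Q_deriv[OF Lt] dL])
  have "((\<lambda>s. b s * Qf (L s) / T s) has_real_derivative
     ((B1 t * Qf (L t) + (Qd (L t) * Ld md t) * b t) * T t - b t * Qf (L t) * (- real k)) / (T t * T t)) (at t within J)"
    by (rule DERIV_divide[OF DERIV_mult[OF dj(2) dQ] T_der Tt])
  moreover have "((B1 t * Qf (L t) + (Qd (L t) * Ld md t) * b t) * T t - b t * Qf (L t) * (- real k)) / (T t * T t)
     = P1d md t" unfolding P1d_def power2_eq_square by (simp only: mult.commute) simp
  ultimately have d: "((\<lambda>s. b s * Qf (L s) / T s) has_real_derivative P1d md t) (at t within J)" by simp
  have eq: "b x * Qf (L x) / T x = P1 x" if "x \<in> J" "dist x t < 1" for x
    using pos[OF that(1)] P1_eq[of x] by simp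
  show "(P1 has_real_derivative P1d md t) (at t within J)"
    by (rule has_field_derivative_transform_within[OF d zero_less_one J(2) eq])
qed

end

lemma vd_pair': assumes "(f has_real_derivative A) (at x within s)" "(g has_real_derivative B) (at x within s)"
  shows "((\<lambda>t. (f t, g t)) has_vector_derivative (A, B)) (at x within s)"
  using assms unfolding has_real_derivative_iff_has_vector_derivative by (rule has_vector_derivative_Pair)

context traj begin

definition "P0d m md t = (md * T t + m t * real k) / (T t)^2"

lemma C2_gen: assumes J: "J \<subseteq> {0..<1}" and pos: "\<And>s. s \<in> J \<Longrightarrow> 0 < b s \<and> 2 < R s"
    and m: "\<And>s. s \<in> J \<Longrightarrow> max (a s) 0 = m s" "\<And>s. s \<in> J \<Longrightarrow> (m has_real_derivative md s) (at s within J)"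
    and cm: "continuous_on J m" "continuous_on J md"
  shows "C2_on J Y"
  unfolding C2_on_def
proof (intro exI conjI ballI)
  fix t assume t: "t \<in> J"
  note dj = der_J[OF J t]
  show "(Y has_vector_derivative (A1 t, B1 t)) (at t within J)"
    using dj unfolding a_def[abs_def] b_def[abs_def] by (rule vd_pair)
  note td = traj_der[OF J t pos m(1) m(2)[OF t]]
  have Tt: "T t \<noteq> 0" using T_pos[of t] J t by auto
  have dP0: "((\<lambda>s. m s / T s) has_real_derivative P0d m (md t) t) (at t within J)"
  proof -
    have "((\<lambda>s. m s / T s) has_real_derivative (md t * T t - m t * (- real k)) / (T t * T t)) (at t within J)"
      by (rule DERIV_divide[OF m(2)[OF t] T_der Tt])
    thus ?thesis unfolding P0d_def by (simp add: power2_eq_square)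
  qed
  have eq: "- 1 + (real k - 1) * (P1 x - m x / T x) = A1 x" if "x \<in> J" "dist x t < 1" for x
    unfolding A1_def P0_eq using m(1)[OF that(1)] by simp
  have dA: "(A1 has_real_derivative (real k - 1) * (P1d (md t) t - P0d m (md t) t)) (at t within J)"
  proof (rule has_field_derivative_transform_within[OF _ zero_less_one t eq])
    show "((\<lambda>x. - 1 + (real k - 1) * (P1 x - m x / T x)) has_real_derivative
        (real k - 1) * (P1d (md t) t - P0d m (md t) t)) (at t within J)"
      using DERIV_add[OF DERIV_const DERIV_cmult[OF DERIV_diff[OF td(3) dP0]], of "-1" "real k - 1"] by simp
  qed
  have dB: "(B1 has_real_derivative - (real k - 1) * P1d (md t) t) (at t within J)"
    unfolding B1_def[abs_def] using td(3) by (auto intro!: derivative_eq_intros)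
  show "((\<lambda>t. (A1 t, B1 t)) has_vector_derivative
      ((\<lambda>t. ((real k - 1) * (P1d (md t) t - P0d m (md t) t), - (real k - 1) * P1d (md t) t)) t)) (at t within J)"
    using vd_pair'[OF dA dB] by simp
next
  note cb = cont_basic[OF J pos]
  have Tnz: "\<forall>s\<in>J. T s \<noteq> 0" using J T_pos by (auto simp: less_imp_neq[symmetric])
  have bnz: "\<forall>s\<in>J. b s \<noteq> 0" using pos by (simp add: less_imp_neq[symmetric])
  have fnz: "\<forall>s\<in>J. f1d (L s) \<noteq> 0"
    using pos f1inv f1d_pos unfolding L_def by (simp add: less_imp_neq[symmetric])
  have cRd: "continuous_on J (\<lambda>s. Rd (md s) s)" unfolding Rd_def
    using cb cm bnz by (intro continuous_intros) auto
  have cLd: "continuous_on J (\<lambda>s. Ld (md s) s)" unfolding Ld_def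
    using cb cRd fnz by (intro continuous_intros) auto
  have cP1d: "continuous_on J (\<lambda>s. P1d (md s) s)" unfolding P1d_def
    using cb cLd Tnz by (intro continuous_intros) auto
  have cP0d: "continuous_on J (\<lambda>s. P0d m (md s) s)" unfolding P0d_def
    using cb cm Tnz by (intro continuous_intros) auto
  show "continuous_on J (\<lambda>t. ((real k - 1) * (P1d (md t) t - P0d m (md t) t), - (real k - 1) * P1d (md t) t))"
    using cP1d cP0d by (intro continuous_intros)
qed

end

lemma inv_alg: fixes l e bb TT aa K1 E :: real
  assumes E: "E = e - 1 - l" "E \<noteq> 0" and nz: "bb \<noteq> 0" "TT \<noteq> 0" and r: "(TT - aa)/bb = l*(e-1)/E"
  shows "((-(K1+1) - (-1 + K1*(bb*(l^2/E)/TT - aa/TT)))*bb - (TT - aa)*(-K1*(bb*(l^2/E)/TT)))/bb^2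
     = -K1 * l * (((e-1)^2 - l^2*e)/E^2) / TT"
proof -
  have e: "e = E + 1 + l" using E by simp
  have "TT - aa = l*(e-1)/E * bb" using r nz(1) by (simp add: divide_eq_eq)
  hence aa: "aa = TT - l*(e-1)/E * bb" by simp
  show ?thesis unfolding aa unfolding e using nz E(2)
    by (simp add: field_simps power2_eq_square)
qed


definition qf :: "real \<Rightarrow> real" where "qf l = 1 - exp (-l) - l * exp (-l)"

lemma qf_eq: "qf l = exp (-l) * EE l"
  unfolding qf_def EE_def by (simp add: algebra_simps exp_minus field_simps)

lemma qf_pos: "0 < l \<Longrightarrow> 0 < qf l"
  using EE_pos qf_eq by simp

lemma qf_deriv: "(qf has_real_derivative l * exp (-l)) (at l)"
  unfolding qf_def[abs_def] by (auto intro!: derivative_eq_intros simp: algebra_simps)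

lemma qf_f1: "0 < l \<Longrightarrow> qf l * f1 l = l * (1 - exp (-l))"
proof -
  assume l: "0 < l"
  have E: "EE l \<noteq> 0" using EE_pos[OF l] by simp
  have "qf l * f1 l = exp (-l) * (l * (exp l - 1))"
    unfolding qf_eq f1_def using E by (simp add: EE_def)
  also have "\<dots> = l * (1 - exp (-l))" by (simp add: algebra_simps exp_minus field_simps)
  finally show ?thesis .
qed

lemma f1_via_qf: "0 < l \<Longrightarrow> f1 l = l * (1 - exp (-l)) / qf l"
  using qf_f1[of l] qf_pos[of l] by (simp add: field_simps)

context traj begin

lemma Ld_inv: assumes t: "0 \<le> t" "t < 1" and g: "0 \<le> a t" "0 < b t" "2 < R t"
  shows "Ld (A1 t) t = - (real k - 1) * L t / T t"
proof -
  define l where "l = L t"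
  have l: "0 < l" "f1 l = R t" using f1inv[OF g(3)] by (auto simp: l_def L_def)
  have E: "EE l \<noteq> 0" using EE_pos[OF l(1)] by simp
  have Tt: "T t \<noteq> 0" using T_pos[OF t(2)] by simp
  have bt: "b t \<noteq> 0" using g by simp
  have r: "(T t - a t) / b t = l * (exp l - 1) / EE l" using l g unfolding R_def f1_def EE_def by simp
  have P1: "P1 t = b t * (l^2 / EE l) / T t" using P1_eq[OF bt] by (simp add: Qf_def l_def)
  have P0: "P0 t = a t / T t" using P0_eq g by simp
  have "Rd (A1 t) t = - (real k - 1) * l * (((exp l - 1)^2 - l^2 * exp l) / (EE l)^2) / T t"
    unfolding Rd_def A1_def B1_def P1 P0 using g(1)
    using inv_alg[of "EE l" "exp l" l "b t" "T t" "a t" "real k - 1", OF EE_def E bt Tt r] by simp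
  hence "Rd (A1 t) t = - (real k - 1) * l * f1d l / T t" by (simp add: f1d_def)
  moreover have "f1d l \<noteq> 0" using f1d_pos[OF l(1)] by simp
  ultimately show ?thesis unfolding Ld_def l_def[symmetric] by simp
qed

end

locale traj0 = traj +
  fixes \<rho> :: real
  assumes rho: "0 < \<rho>" and init: "Y 0 = y_init k \<rho>"
begin

definition "c0 = real k / \<rho>"

lemma c0_pos: "0 < c0" using rho k3 by (simp add: c0_def)

lemma init_vals: "a 0 = real k * exp (- c0)" "b 0 = \<rho> * qf c0" "R 0 = f1 c0" "L 0 = c0"
    "0 < a 0" "0 < b 0" "2 < R 0"
proof -
  have ck: "real k = \<rho> * c0" using rho by (simp add: c0_def)
  show a0: "a 0 = real k * exp (- c0)" using init unfolding a_def y_init_def c0_def by simp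
  show b0: "b 0 = \<rho> * qf c0" using init unfolding b_def y_init_def c0_def qf_def
    using rho by (simp add: algebra_simps)
  show "0 < a 0" using a0 k3 by simp
  show bp: "0 < b 0" using b0 qf_pos[OF c0_pos] rho by simp
  have "R 0 = (real k - real k * exp (- c0)) / (\<rho> * qf c0)"
    unfolding R_def T_def using a0 b0 k3 by simp
  also have "\<dots> = c0 * (1 - exp (-c0)) / qf c0" unfolding ck using rho qf_pos[OF c0_pos] by (simp add: field_simps)
  also have "\<dots> = f1 c0" using f1_via_qf[OF c0_pos] by simp
  finally show R0: "R 0 = f1 c0" .
  show "L 0 = c0" unfolding L_def R0 using f1inv_f1[OF c0_pos] .
  show "2 < R 0" using R0 f1_gt2[OF c0_pos] by simp
qed

lemma explicit_on: assumes s: "0 \<le> s" "s < 1"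
    and good: "\<And>t. t \<in> {0..s} \<Longrightarrow> 0 \<le> a t \<and> 0 < b t \<and> 2 < R t"
    and t: "t \<in> {0..s}"
  shows "L t = c0 * (1 - t) powr ((real k - 1) / real k)" "b t = \<rho> * qf (L t)"
    "a t = T t - \<rho> * L t * (1 - exp (- L t))"
proof -
  define J where "J = {0..s}"
  have J: "J \<subseteq> {0..<1}" using s by (auto simp: J_def)
  have m: "\<And>x. x \<in> J \<Longrightarrow> max (a x) 0 = a x" using good by (auto simp: J_def)
  have Lp: "\<And>x. x \<in> J \<Longrightarrow> 0 < L x" using good f1inv unfolding L_def J_def by auto
  have dL: "(L has_real_derivative - (real k - 1) * L x / T x) (at x within J)" if x: "x \<in> J" for x
  proof -
    have "(L has_real_derivative Ld (A1 x) x) (at x within J)"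
      using traj_der(2)[OF J x, of a "A1 x"] good m der_J(1)[OF J x] by (auto simp: J_def)
    moreover have "Ld (A1 x) x = - (real k - 1) * L x / T x"
    proof -
      have "0 \<le> x" "x \<le> s" using x by (auto simp: J_def)
      thus ?thesis using Ld_inv[of x] good[of x] s by auto
    qed
    ultimately show ?thesis by simp
  qed
  define I1 where "I1 x = ln (L x) - ((real k - 1) / real k) * ln (1 - x)" for x
  have "\<exists>c. \<forall>x\<in>J. I1 x = c"
  proof (rule has_field_derivative_zero_constant)
    show "convex J" by (simp add: J_def)
  next
    fix x assume x: "x \<in> J"
    have x1: "0 < 1 - x" using x J by auto
    have Tx: "T x = real k * (1 - x)" by (simp add: T_def)
    have d1: "((\<lambda>x. ln (L x)) has_real_derivative 1 / L x * (- (real k - 1) * L x / T x)) (at x within J)"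
      by (rule DERIV_chain2[OF DERIV_ln_divide[OF Lp[OF x]] dL[OF x]])
    have d2: "((\<lambda>x. ln (1 - x)) has_real_derivative 1 / (1 - x) * (0 - 1)) (at x within J)"
      by (rule DERIV_chain2[where g="\<lambda>x. 1 - x", OF DERIV_ln_divide[OF x1]]) (auto intro!: derivative_eq_intros)
    have "(I1 has_real_derivative 1 / L x * (- (real k - 1) * L x / T x) - ((real k - 1) / real k) * (1 / (1 - x) * (0 - 1))) (at x within J)"
      unfolding I1_def[abs_def] by (rule DERIV_diff[OF d1 DERIV_cmult[OF d2]])
    moreover have "1 / L x * (- (real k - 1) * L x / T x) - ((real k - 1) / real k) * (1 / (1 - x) * (0 - 1)) = 0"
      using Lp[OF x] x1 k3 unfolding Tx by (simp add: field_simps)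
    ultimately show "(I1 has_real_derivative 0) (at x within J)" by simp
  qed
  then obtain c where c: "\<And>x. x \<in> J \<Longrightarrow> I1 x = c" by blast
  have tJ: "t \<in> J" "0 \<in> J" using t s by (auto simp: J_def)
  have t1: "0 < 1 - t" using tJ J by auto
  have "ln (L t) = ln (L 0) + ((real k - 1) / real k) * ln (1 - t)"
    using c[OF tJ(1)] c[OF tJ(2)] by (simp add: I1_def)
  hence "L t = exp (ln (L 0) + ((real k - 1) / real k) * ln (1 - t))"
    using Lp[OF tJ(1)] by (metis exp_ln)
  also have "\<dots> = L 0 * (1 - t) powr ((real k - 1) / real k)"
    using Lp[OF tJ(2)] t1 by (simp add: exp_add powr_def)
  finally show Lt: "L t = c0 * (1 - t) powr ((real k - 1) / real k)" using init_vals by simp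
  have qp: "\<And>x. x \<in> J \<Longrightarrow> 0 < qf (L x)" using Lp qf_pos by auto
  define I2 where "I2 x = ln (b x) - ln (qf (L x))" for x
  have "\<exists>c. \<forall>x\<in>J. I2 x = c"
  proof (rule has_field_derivative_zero_constant)
    show "convex J" by (simp add: J_def)
  next
    fix x assume x: "x \<in> J"
    have bx: "0 < b x" using good x by (auto simp: J_def)
    have x1: "x < 1" using x J by auto
    have Tx: "0 < T x" using T_pos[OF x1] .
    have d1: "((\<lambda>x. ln (b x)) has_real_derivative 1 / b x * B1 x) (at x within J)"
      by (rule DERIV_chain2[OF DERIV_ln_divide[OF bx] der_J(2)[OF J x]])
    have dq: "((\<lambda>x. qf (L x)) has_real_derivative L x * exp (- L x) * (- (real k - 1) * L x / T x)) (at x within J)"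
      by (rule DERIV_chain2[OF qf_deriv dL[OF x]])
    have d2: "((\<lambda>x. ln (qf (L x))) has_real_derivative 1 / qf (L x) * (L x * exp (- L x) * (- (real k - 1) * L x / T x))) (at x within J)"
      by (rule DERIV_chain2[OF DERIV_ln_divide[OF qp[OF x]] dq])
    have "(I2 has_real_derivative 1 / b x * B1 x - 1 / qf (L x) * (L x * exp (- L x) * (- (real k - 1) * L x / T x))) (at x within J)"
      unfolding I2_def[abs_def] by (rule DERIV_diff[OF d1 d2])
    moreover have "1 / b x * B1 x - 1 / qf (L x) * (L x * exp (- L x) * (- (real k - 1) * L x / T x)) = 0"
    proof -
      have E: "0 < EE (L x)" using EE_pos Lp[OF x] by simp
      have "B1 x = - (real k - 1) * (b x * (L x ^ 2 / EE (L x)) / T x)"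
        unfolding B1_def using P1_eq[of x] bx by (simp add: Qf_def)
      hence h1: "1 / b x * B1 x = - (real k - 1) * L x ^ 2 / (EE (L x) * T x)" using bx E Tx by (simp add: field_simps)
      have h2: "1 / qf (L x) * (L x * exp (- L x) * (- (real k - 1) * L x / T x)) = - (real k - 1) * L x ^ 2 / (EE (L x) * T x)"
        unfolding qf_eq using E Tx by (simp add: field_simps power2_eq_square)
      show ?thesis using h1 h2 by simp
    qed
    ultimately show "(I2 has_real_derivative 0) (at x within J)" by simp
  qed
  then obtain c2 where c2: "\<And>x. x \<in> J \<Longrightarrow> I2 x = c2" by blast
  have b0: "0 < b 0" using init_vals by simp
  have "ln (b t) - ln (qf (L t)) = ln (b 0) - ln (qf (L 0))"
    using c2[OF tJ(1)] c2[OF tJ(2)] by (simp add: I2_def)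
  also have "\<dots> = ln \<rho>" using init_vals rho qf_pos[OF c0_pos] by (simp add: ln_mult)
  finally have "ln (b t) = ln (\<rho> * qf (L t))" using rho qp[OF tJ(1)] by (simp add: ln_mult)
  thus bt: "b t = \<rho> * qf (L t)" using good[OF t] rho qp[OF tJ(1)]
    by (metis ln_inj_iff mult_pos_pos)
  have Rt: "R t = f1 (L t)" using f1inv good[OF t] by (simp add: L_def)
  have "a t = T t - b t * R t" using good[OF t] unfolding R_def by (simp add: field_simps)
  also have "\<dots> = T t - \<rho> * (qf (L t) * f1 (L t))" using bt Rt by simp
  also have "\<dots> = T t - \<rho> * L t * (1 - exp (- L t))" using qf_f1[OF Lp[OF tJ(1)]] by simp
  finally show "a t = T t - \<rho> * L t * (1 - exp (- L t))" .
qed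

end

context traj0 begin

definition "LLe t = real k * (u_fun k t)^(k-1) / \<rho>"
definition "aE t = real k * (u_fun k t)^(k-1) * h_fun k \<rho> (u_fun k t)"
definition "bE t = \<rho> * qf (LLe t)"

lemma u_pow_km1: assumes "t < 1" shows "(1 - t) powr ((real k - 1) / real k) = (u_fun k t)^(k-1)"
proof -
  have u: "0 < u_fun k t" using u_facts[OF assms] k3 by simp
  have "(u_fun k t)^(k-1) = u_fun k t powr real (k-1)" using u by (simp add: powr_realpow)
  also have "\<dots> = (1 - t) powr (1 / real k * real (k-1))" unfolding u_fun_def by (simp add: powr_powr)
  also have "1 / real k * real (k-1) = (real k - 1) / real k" using k3 by (simp add: of_nat_diff)
  finally show ?thesis by simp
qed

lemma T_u: assumes "t < 1" shows "T t = real k * (u_fun k t)^(k-1) * u_fun k t"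
proof -
  have "(u_fun k t)^(k-1) * u_fun k t = (u_fun k t)^k"
    using k3 by (metis Suc_diff_1 less_le_trans numeral_3_eq_3 zero_less_Suc power_Suc2)
  thus ?thesis using u_facts[OF assms] k3 by (simp add: T_def mult.assoc)
qed

lemma aE_alt: assumes "t < 1" shows "aE t = T t - \<rho> * LLe t * (1 - exp (- LLe t))"
proof -
  have h: "h_fun k \<rho> (u_fun k t) = u_fun k t - 1 + exp (- LLe t)" unfolding h_fun_def LLe_def by simp
  show ?thesis unfolding aE_def h T_u[OF assms] LLe_def using rho by (simp add: algebra_simps)
qed

lemma LLe_pos: "t < 1 \<Longrightarrow> 0 < LLe t"
  using u_facts[of t k] k3 rho by (simp add: LLe_def)

lemma explicit_u: assumes s: "0 \<le> s" "s < 1"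
    and good: "\<And>t. t \<in> {0..s} \<Longrightarrow> 0 \<le> a t \<and> 0 < b t \<and> 2 < R t"
    and t: "t \<in> {0..s}"
  shows "L t = LLe t" "b t = bE t" "a t = aE t"
proof -
  have t1: "t < 1" using t s by simp
  note e = explicit_on[OF s good t]
  show L: "L t = LLe t" using e(1) u_pow_km1[OF t1] unfolding LLe_def c0_def by simp
  show "b t = bE t" using e(2) L by (simp add: bE_def)
  show "a t = aE t" using e(3) L aE_alt[OF t1] by simp
qed

lemma explicit_R: assumes "t < 1" shows "T t - aE t = bE t * f1 (LLe t)"
  using aE_alt[OF assms] qf_f1[OF LLe_pos[OF assms]] by (simp add: bE_def)

lemma cont_u: "continuous_on {0..<1} (u_fun k)"
  unfolding u_fun_def[abs_def] by (intro continuous_intros) auto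

lemma cont_aE: "continuous_on {0..<1} aE"
  unfolding aE_def[abs_def] h_fun_def using cont_u rho by (intro continuous_intros) auto

lemma cont_bE: "continuous_on {0..<1} bE"
  unfolding bE_def[abs_def] LLe_def[abs_def] qf_def using cont_u rho by (intro continuous_intros) auto

lemma zero_closure: fixes s :: real assumes "continuous_on {0..s} f" "\<And>t. t \<in> {0..<s} \<Longrightarrow> f t = (0::real)" "0 < s"
  shows "f s = 0"
proof -
  have "closed {x \<in> {0..s}. f x = 0}" by (rule continuous_closed_preimage_constant[OF assms(1)]) simp
  moreover have "{0..<s} \<subseteq> {x \<in> {0..s}. f x = 0}" using assms(2) by auto
  ultimately have "closure {0..<s} \<subseteq> {x \<in> {0..s}. f x = 0}" by (rule closure_minimal[rotated])
  hence "{0..s} \<subseteq> {x \<in> {0..s}. f x = 0}" using assms(3) by simp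
  moreover have "s \<in> {0..s}" using assms(3) by simp
  ultimately show ?thesis by blast
qed

end

context traj0 begin

definition "good t \<longleftrightarrow> 0 \<le> a t \<and> 0 < b t \<and> 2 < R t"

lemma aE_nonneg: assumes "\<rho> \<le> M_k k" "0 \<le> t" "t \<le> theta_star k \<rho>"
  shows "0 \<le> aE t" "t < theta_star k \<rho> \<Longrightarrow> 0 < aE t"
proof -
  note ts = theta_star_small[OF k3 rho assms(1)]
  have t1: "t < 1" using assms ts by simp
  have u: "0 < u_fun k t" using u_facts[OF t1] k3 by simp
  have h: "0 \<le> h_fun k \<rho> (u_fun k t)"
  proof (cases "t < theta_star k \<rho>")
    case True thus ?thesis using below_theta_star[OF assms(2) True] by simp
  next
    case False thus ?thesis using assms ts by simp
  qed
  show "0 \<le> aE t" unfolding aE_def using u h by simp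
  assume "t < theta_star k \<rho>"
  hence "0 < h_fun k \<rho> (u_fun k t)" using below_theta_star[OF assms(2)] by simp
  thus "0 < aE t" unfolding aE_def using u k3 by simp
qed

lemma good_explicit: assumes "t < 1" "a t = aE t" "b t = bE t" "0 \<le> aE t"
  shows "good t"
proof -
  have bp: "0 < bE t" unfolding bE_def using qf_pos[OF LLe_pos[OF assms(1)]] rho by simp
  have "R t = f1 (LLe t)" unfolding R_def using assms explicit_R[OF assms(1)] bp by simp
  thus ?thesis unfolding good_def using assms bp f1_gt2[OF LLe_pos[OF assms(1)]] by simp
qed

lemma good_upto_ts: assumes M: "\<rho> \<le> M_k k"
  shows "\<And>t. t \<in> {0..theta_star k \<rho>} \<Longrightarrow> good t"
proof -
  define ts where "ts = theta_star k \<rho>"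
  note tsf = theta_star_small[OF k3 rho M, folded ts_def]
  define G where "G = {s. 0 \<le> s \<and> s \<le> ts \<and> (\<forall>t\<in>{0..s}. good t)}"
  have g0: "good 0" using init_vals by (simp add: good_def)
  have G0: "0 \<in> G" using g0 tsf by (auto simp: G_def)
  have bdd: "bdd_above G" by (auto simp: G_def bdd_above_def)
  have neG: "G \<noteq> {}" using G0 by auto
  define s0 where "s0 = Sup G"
  have s0: "0 \<le> s0" "s0 \<le> ts" using cSup_upper[OF G0 bdd] cSup_least[OF neG, of ts]
    by (auto simp: s0_def G_def)
  have s01: "s0 < 1" using s0 tsf by simp
  have expl: "a t = aE t \<and> b t = bE t" if "s \<in> G" "t \<in> {0..s}" for s t
  proof -
    have s: "0 \<le> s" "s < 1" "\<forall>t\<in>{0..s}. good t" using that tsf by (auto simp: G_def)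
    show ?thesis using explicit_u(2,3)[OF s(1,2) _ that(2)] s(3) by (auto simp: good_def)
  qed
  have below: "good t \<and> a t = aE t \<and> b t = bE t" if "0 \<le> t" "t < s0" for t
  proof -
    have "t < Sup G" using that by (simp add: s0_def)
    then obtain s where s: "s \<in> G" "t < s" using less_cSup_iff[OF neG bdd] by blast
    thus ?thesis using expl[OF s(1), of t] that by (auto simp: G_def)
  qed
  have at_s0: "a s0 = aE s0 \<and> b s0 = bE s0"
  proof (cases "s0 = 0")
    case True thus ?thesis using expl[OF G0, of 0] by simp
  next
    case False
    hence sp: "0 < s0" using s0 by simp
    have sub: "{0..s0} \<subseteq> {0..<1}" using s01 by auto
    have "(\<lambda>t. a t - aE t) s0 = 0"
      by (rule zero_closure[OF _ _ sp]) (use continuous_on_subset[OF a_cont sub] continuous_on_subset[OF cont_aE sub] below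
          in \<open>auto intro!: continuous_intros\<close>)
    moreover have "(\<lambda>t. b t - bE t) s0 = 0"
      by (rule zero_closure[OF _ _ sp]) (use continuous_on_subset[OF b_cont sub] continuous_on_subset[OF cont_bE sub] below
          in \<open>auto intro!: continuous_intros\<close>)
    ultimately show ?thesis by simp
  qed
  have gs0: "good s0" using good_explicit[OF s01] at_s0 aE_nonneg(1)[OF M s0[unfolded ts_def]] by simp
  have s0G: "s0 \<in> G" using s0 gs0 below by (auto simp: G_def) (metis atLeastAtMost_iff below gs0 order_le_less)
  have "s0 = ts"
  proof (rule ccontr)
    assume "s0 \<noteq> ts"
    hence lt: "s0 < ts" using s0 by simp
    have ap: "0 < a s0" using at_s0 aE_nonneg(2)[OF M s0(1)] lt s0 by (simp add: ts_def)
    have bp: "0 < b s0" and Rp: "2 < R s0" using gs0 by (auto simp: good_def)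
    have s0in: "s0 \<in> {0..<1}" using s0 s01 by simp
    have ca: "(a \<longlongrightarrow> a s0) (at s0 within {0..<1})"
      using a_cont s0in by (simp add: continuous_on_def)
    have cb: "(b \<longlongrightarrow> b s0) (at s0 within {0..<1})"
      using b_cont s0in by (simp add: continuous_on_def)
    have cR: "(R \<longlongrightarrow> R s0) (at s0 within {0..<1})"
      unfolding R_def[abs_def] T_def using bp by (intro tendsto_intros ca cb) auto
    have ev: "\<forall>\<^sub>F x in at s0 within {0..<1}. 0 < a x \<and> 0 < b x \<and> 2 < R x"
      using order_tendstoD(1)[OF ca ap] order_tendstoD(1)[OF cb bp] order_tendstoD(1)[OF cR Rp]
      by eventually_elim auto
    then obtain d where d: "0 < d" "\<And>x. x \<in> {0..<1} \<Longrightarrow> x \<noteq> s0 \<Longrightarrow> dist x s0 < d \<Longrightarrow> 0 < a x \<and> 0 < b x \<and> 2 < R x"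
      unfolding eventually_at by auto
    define s1 where "s1 = min (s0 + d/2) ts"
    have s1: "s0 < s1" "s1 \<le> ts" using d lt by (auto simp: s1_def)
    have "\<forall>t\<in>{0..s1}. good t"
    proof
      fix t assume t: "t \<in> {0..s1}"
      show "good t"
      proof (cases "t \<le> s0")
        case True thus ?thesis using s0G t by (auto simp: G_def)
      next
        case False
        have "t \<in> {0..<1}" using t s1 tsf by auto
        moreover have "dist t s0 < d" using False t d by (auto simp: s1_def dist_real_def)
        ultimately show ?thesis using d(2)[of t] False by (auto simp: good_def)
      qed
    qed
    hence "s1 \<in> G" using s1 s0 by (auto simp: G_def)
    hence "s1 \<le> s0" unfolding s0_def by (rule cSup_upper[OF _ bdd])
    thus False using s1 by simp
  qed
  thus "\<And>t. t \<in> {0..theta_star k \<rho>} \<Longrightarrow> good t" using s0G by (auto simp: G_def ts_def)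
qed

end

context traj0 begin

lemma at_ts: assumes M: "\<rho> \<le> M_k k"
  shows "a (theta_star k \<rho>) = 0" "L (theta_star k \<rho>) = lam_rho k \<rho>" "0 < b (theta_star k \<rho>)"
    "b (theta_star k \<rho>) = real k / f1 (lam_rho k \<rho>) * (1 - theta_star k \<rho>)"
    "R (theta_star k \<rho>) = f1 (lam_rho k \<rho>)"
proof -
  define ts where "ts = theta_star k \<rho>"
  note tsf = theta_star_small[OF k3 rho M, folded ts_def]
  note lr = lam_rho_char[OF k3 rho M]
  have ts: "0 \<le> ts" "ts < 1" using tsf by auto
  have gd: "\<And>t. t \<in> {0..ts} \<Longrightarrow> 0 \<le> a t \<and> 0 < b t \<and> 2 < R t"
    using good_upto_ts[OF M] by (auto simp: good_def ts_def)
  have tsin: "ts \<in> {0..ts}" using ts by simp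
  note ex = explicit_u[OF ts gd tsin]
  show a0: "a ts = 0" using ex(3) tsf by (simp add: aE_def)
  have "LLe ts = lam_rho k \<rho>"
  proof -
    have "\<rho> = real k * (u_fun k ts)^(k-1) / lam_rho k \<rho>" using lr(2) tsf(2) by (simp add: g_fun_def)
    thus ?thesis unfolding LLe_def using lr(1) rho by (simp add: field_simps)
  qed
  thus L: "L ts = lam_rho k \<rho>" using ex(1) by simp
  show bp: "0 < b ts" using gd[OF tsin] by simp
  have R: "R ts = f1 (L ts)" using f1inv gd[OF tsin] by (simp add: L_def)
  thus "R ts = f1 (lam_rho k \<rho>)" using L by simp
  have "T ts / b ts = f1 (lam_rho k \<rho>)" using R L a0 by (simp add: R_def)
  moreover have "0 < f1 (lam_rho k \<rho>)" using f1_gt2[OF lr(1)] by simp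
  ultimately show "b ts = real k / f1 (lam_rho k \<rho>) * (1 - ts)" using bp by (simp add: T_def field_simps)
qed

lemma interior_01: "interior {0..<(1::real)} = {0<..<1}"
  by simp

lemma der_at: assumes "0 < t" "t < 1" shows "(Y has_vector_derivative (A1 t, B1 t)) (at t)"
proof -
  have "t \<in> interior {0..<1}" using assms by simp
  hence "at t within {0..<1} = at t" by (rule at_within_interior)
  thus ?thesis using der[of t] assms F_eq by simp
qed

lemma a_der_at: assumes "0 < t" "t < 1" shows "(a has_real_derivative A1 t) (at t)"
  using vd_fst[OF der_at[OF assms]] unfolding a_def[abs_def] by simp

end

context traj0 begin

lemma partb: assumes hr: "\<rho> = rho_k k"
  shows "b (theta_star k \<rho>) = 1 - theta_star k \<rho>" "0 < 1 - theta_star k \<rho>"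
    "A1 (theta_star k \<rho>) < 0" "B1 (theta_star k \<rho>) < 0"
    "(Y has_vector_derivative (A1 (theta_star k \<rho>), B1 (theta_star k \<rho>))) (at (theta_star k \<rho>))"
    "\<exists>\<epsilon>>0. C2_on {0..theta_star k \<rho>} Y \<and> C2_on {theta_star k \<rho>..theta_star k \<rho> + \<epsilon>} Y"
proof -
  note rk = rhok_facts[OF k3]
  have M: "\<rho> \<le> M_k k" using rk hr by simp
  have lr: "lam_rho k \<rho> = lam_k k" using rk hr by simp
  note lk = lamk_facts[OF k3]
  define ts where "ts = theta_star k \<rho>"
  note tsf = theta_star_small[OF k3 rho M, folded ts_def]
  note at = at_ts[OF M, folded ts_def, unfolded lr lk(2)]
  have ts: "0 < ts" "ts < 1" using tsf by auto
  have kk: "real k / real k = 1" using k3 by simp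
  show "b ts = 1 - ts" using at(4) kk by simp
  show "0 < 1 - ts" using ts by simp
  have bt: "b ts \<noteq> 0" using at(3) by simp
  have Tt: "T ts = real k * b ts" using at(4) k3 by (simp add: T_def)
  define l where "l = lam_k k"
  have l: "0 < l" "f1 l = real k" "real (k-1) * l < exp l - 1" using lk by (auto simp: l_def)
  have E: "0 < EE l" using EE_pos[OF l(1)] .
  have El: "real k * EE l = l * (exp l - 1)" using l(2) E unfolding f1_def EE_def by (simp add: field_simps)
  have P1: "P1 ts = l / (exp l - 1)"
  proof -
    have "P1 ts = b ts * Qf l / T ts" using P1_eq[OF bt] at(2) by (simp add: l_def)
    also have "\<dots> = Qf l / real k" using Tt bt k3 by simp
    also have "\<dots> = l^2 / (real k * EE l)" by (simp add: Qf_def)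
    also have "\<dots> = l / (exp l - 1)" unfolding El using l(1) by (simp add: power2_eq_square)
    finally show ?thesis .
  qed
  have P0: "P0 ts = 0" using P0_eq at(1) by simp
  have e1: "0 < exp l - 1" using l(1) by simp
  have "(real k - 1) * P1 ts < 1" unfolding P1 using l(3) e1 k3 by (simp add: field_simps of_nat_diff)
  thus A1n: "A1 ts < 0" unfolding A1_def P0 by simp
  have "0 < P1 ts" unfolding P1 using l(1) e1 by simp
  moreover have "- (real k - 1) < 0" using k3 by simp
  ultimately show "B1 ts < 0" unfolding B1_def by (simp only: mult_neg_pos)
  show "(Y has_vector_derivative (A1 ts, B1 ts)) (at ts)" using der_at[OF ts] .
  have gd: "\<And>t. t \<in> {0..ts} \<Longrightarrow> 0 \<le> a t \<and> 0 < b t \<and> 2 < R t"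
    using good_upto_ts[OF M] by (auto simp: good_def ts_def)
  have J1: "{0..ts} \<subseteq> {0..<1}" using ts by auto
  have C1: "C2_on {0..ts} Y"
  proof (rule C2_gen[OF J1, of a A1])
    show "\<And>s. s \<in> {0..ts} \<Longrightarrow> 0 < b s \<and> 2 < R s" using gd by auto
    show "\<And>s. s \<in> {0..ts} \<Longrightarrow> max (a s) 0 = a s" using gd by auto
    show "\<And>s. s \<in> {0..ts} \<Longrightarrow> (a has_real_derivative A1 s) (at s within {0..ts})" using der_J(1)[OF J1] by blast
    show "continuous_on {0..ts} a" using continuous_on_subset[OF a_cont J1] .
    show "continuous_on {0..ts} A1" using cont_basic(11)[OF J1] gd by blast
  qed
  have tsin: "ts \<in> {0..<1}" using ts by simp
  have Rts: "2 < R ts" using gd[of ts] ts by simp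
  have bts: "0 < b ts" using gd[of ts] ts by simp
  have ca: "(a \<longlongrightarrow> a ts) (at ts within {0..<1})" using a_cont tsin by (simp add: continuous_on_def)
  have cb: "(b \<longlongrightarrow> b ts) (at ts within {0..<1})" using b_cont tsin by (simp add: continuous_on_def)
  have cR: "(R \<longlongrightarrow> R ts) (at ts within {0..<1})"
    unfolding R_def[abs_def] T_def using bts by (intro tendsto_intros ca cb) auto
  have ev: "\<forall>\<^sub>F x in at ts within {0..<1}. 0 < b x \<and> 2 < R x"
    using order_tendstoD(1)[OF cb bts] order_tendstoD(1)[OF cR Rts] by eventually_elim auto
  then obtain d where d: "0 < d" "\<And>x. x \<in> {0..<1} \<Longrightarrow> x \<noteq> ts \<Longrightarrow> dist x ts < d \<Longrightarrow> 0 < b x \<and> 2 < R x"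
    unfolding eventually_at by auto
  define \<delta> where "\<delta> = min (d/2) ((1 - ts)/2)"
  have "\<delta> \<le> (1 - ts)/2" "\<delta> \<le> d/2" unfolding \<delta>_def by (rule min.cobounded2, rule min.cobounded1)
  hence \<delta>: "0 < \<delta>" "ts + \<delta> < 1" "\<delta> < d" using d ts by (auto simp: \<delta>_def)
  define J2 where "J2 = {ts..ts+\<delta>}"
  have J2: "J2 \<subseteq> {0..<1}" using \<delta> ts by (auto simp: J2_def)
  have pos2: "\<And>s. s \<in> J2 \<Longrightarrow> 0 < b s \<and> 2 < R s"
  proof -
    fix s assume s: "s \<in> J2"
    show "0 < b s \<and> 2 < R s"
    proof (cases "s = ts")
      case True thus ?thesis using bts Rts by simp
    next
      case False thus ?thesis using d(2)[of s] s J2 \<delta> by (auto simp: J2_def dist_real_def)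
    qed
  qed
  have cA: "continuous_on J2 A1" using cont_basic(11)[OF J2 pos2] .
  have tsJ2: "ts \<in> J2" using \<delta> by (simp add: J2_def)
  have "(A1 \<longlongrightarrow> A1 ts) (at ts within J2)" using cA tsJ2 by (simp add: continuous_on_def)
  hence "\<forall>\<^sub>F x in at ts within J2. A1 x < 0" using A1n by (rule order_tendstoD(2))
  then obtain d2 where d2: "0 < d2" "\<And>x. x \<in> J2 \<Longrightarrow> x \<noteq> ts \<Longrightarrow> dist x ts < d2 \<Longrightarrow> A1 x < 0"
    unfolding eventually_at by auto
  define \<epsilon> where "\<epsilon> = min \<delta> (d2/2)"
  have \<epsilon>: "0 < \<epsilon>" "\<epsilon> \<le> \<delta>" using \<delta> d2 by (auto simp: \<epsilon>_def)
  define J where "J = {ts..ts+\<epsilon>}"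
  have JJ2: "J \<subseteq> J2" using \<epsilon> by (auto simp: J_def J2_def)
  have J: "J \<subseteq> {0..<1}" using JJ2 J2 by auto
  have An: "\<And>x. x \<in> J \<Longrightarrow> A1 x < 0"
  proof -
    fix x assume x: "x \<in> J"
    show "A1 x < 0"
    proof (cases "x = ts")
      case True thus ?thesis using A1n by simp
    next
      case False thus ?thesis using d2(2)[of x] x JJ2 \<epsilon> d2 by (auto simp: J_def dist_real_def \<epsilon>_def)
    qed
  qed
  have aneg: "a t \<le> 0" if t: "t \<in> J" for t
  proof (cases "t = ts")
    case True thus ?thesis using at(1) by simp
  next
    case False
    hence tt: "ts < t" using t by (simp add: J_def)
    have "a t \<le> a ts"
    proof (rule DERIV_nonpos_imp_decreasing_open[of ts t a])
      show "ts \<le> t" using tt by simp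
    next
      fix x assume x: "ts < x" "x < t"
      have xJ: "x \<in> J" using x t by (auto simp: J_def)
      have "0 < x" "x < 1" using x ts J xJ by auto
      thus "\<exists>y. (a has_real_derivative y) (at x) \<and> y \<le> 0"
        using a_der_at An[OF xJ] by (intro exI[of _ "A1 x"]) auto
    next
      have "{ts..t} \<subseteq> {0..<1}" using t J ts by (auto simp: J_def)
      thus "continuous_on {ts..t} a" using continuous_on_subset[OF a_cont] by blast
    qed
    thus ?thesis using at(1) by simp
  qed
  have C2: "C2_on J Y"
  proof (rule C2_gen[OF J, of "\<lambda>_. 0" "\<lambda>_. 0"])
    show "\<And>s. s \<in> J \<Longrightarrow> 0 < b s \<and> 2 < R s" using pos2 JJ2 by auto
    show "\<And>s. s \<in> J \<Longrightarrow> max (a s) 0 = 0" using aneg by auto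
  qed (auto intro: continuous_intros)
  show "\<exists>\<epsilon>>0. C2_on {0..ts} Y \<and> C2_on {ts..ts+\<epsilon>} Y" using C1 C2 \<epsilon> by (auto simp: J_def)
qed

end

lemma inst: assumes hk: "3 \<le> k" and hy: "is_y_solution k y" and r: "0 < \<rho>"
  shows "traj0 k (\<lambda>t. y t \<rho>) \<rho>"
proof -
  have h: "y 0 \<rho> = y_init k \<rho>" "\<And>\<theta>. \<theta> \<in> {0..<1} \<Longrightarrow> dom_ok k \<theta> (y \<theta> \<rho>) \<and>
        ((\<lambda>t. y t \<rho>) has_vector_derivative F_vec k (y \<theta> \<rho>) \<theta>) (at \<theta> within {0..<1})"
    using hy r unfolding is_y_solution_def by auto
  show ?thesis
    by (unfold_locales) (use hk h r in auto)
qed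

theorem proposition3p3:
  fixes k :: nat and y :: "real \<Rightarrow> real \<Rightarrow> real \<times> real"
  assumes hk: "k \<ge> 3"
    and hy: "is_y_solution k y"
  shows "(\<forall>\<rho>>0. \<rho> > M_k k \<longrightarrow> theta_star k \<rho> = 1)
       \<and> (\<forall>\<rho>>0. \<rho> \<le> M_k k \<longrightarrow>
            theta_star k \<rho> = 1 - (1 - exp (- lam_rho k \<rho>)) ^ k
          \<and> snd (y (theta_star k \<rho>) \<rho>) = real k / f1 (lam_rho k \<rho>) * (1 - theta_star k \<rho>))
       \<and> (snd (y (theta_star k (rho_k k)) (rho_k k)) = 1 - theta_star k (rho_k k)
          \<and> 1 - theta_star k (rho_k k) > 0)
       \<and> (\<exists>D. ((\<lambda>t. y t (rho_k k)) has_vector_derivative D) (at (theta_star k (rho_k k)))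
              \<and> fst D < 0 \<and> snd D < 0)
       \<and> (\<exists>\<epsilon>>0. C2_on {0..theta_star k (rho_k k)} (\<lambda>t. y t (rho_k k))
              \<and> C2_on {theta_star k (rho_k k)..theta_star k (rho_k k) + \<epsilon>} (\<lambda>t. y t (rho_k k)))"
proof (intro conjI allI impI)
  fix \<rho> :: real assume "0 < \<rho>" "M_k k < \<rho>"
  thus "theta_star k \<rho> = 1" using theta_star_big hk by blast
next
  fix \<rho> :: real assume r: "0 < \<rho>" "\<rho> \<le> M_k k"
  show "theta_star k \<rho> = 1 - (1 - exp (- lam_rho k \<rho>)) ^ k" using theta_star_small(1)[OF hk r] .
  interpret traj0 k "\<lambda>t. y t \<rho>" \<rho> by (rule inst[OF hk hy r(1)])
  show "snd (y (theta_star k \<rho>) \<rho>) = real k / f1 (lam_rho k \<rho>) * (1 - theta_star k \<rho>)"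
    using at_ts(4)[OF r(2)] by (simp add: b_def)
next
  have r: "0 < rho_k k" using rhok_facts[OF hk] by simp
  interpret traj0 k "\<lambda>t. y t (rho_k k)" "rho_k k" by (rule inst[OF hk hy r])
  note pb = partb[OF refl]
  show "snd (y (theta_star k (rho_k k)) (rho_k k)) = 1 - theta_star k (rho_k k)" using pb(1) by (simp add: b_def)
  show "1 - theta_star k (rho_k k) > 0" using pb(2) .
  show "\<exists>D. ((\<lambda>t. y t (rho_k k)) has_vector_derivative D) (at (theta_star k (rho_k k))) \<and> fst D < 0 \<and> snd D < 0"
    using pb(3,4,5) by (intro exI[of _ "(A1 (theta_star k (rho_k k)), B1 (theta_star k (rho_k k)))"]) simp
  show "\<exists>\<epsilon>>0. C2_on {0..theta_star k (rho_k k)} (\<lambda>t. y t (rho_k k))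
              \<and> C2_on {theta_star k (rho_k k)..theta_star k (rho_k k) + \<epsilon>} (\<lambda>t. y t (rho_k k))"
    using pb(6) .
qed

end
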